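(* Let $\mu$ be a probability distribution on $\mathbb{R}_+=[0,\infty)$, let $c>0$, $\Delta:=(0,c]$, and $p(x):=c^{-1}\mu((x-c,x])$. Then $\mu\in\mathcal{S}_\Delta$ if and only if $p\in\mathcal{S}_d$. Moreover, $\mu\in\mathcal{S}_{loc}$ if and only if there exists a density function $q$ on $\mathbb{R}_+$ (i.e. $q\ge 0$, $q=0$ on $(-\infty,0)$, $\int q=1$) such that $q\in\mathcal{S}_d$ and $c^{-1}\mu((x-c,x])\sim q(x)$ for every $c>0$.
   Context: For positive functions $f,g$ defined on some $[a,\infty)$, $f(x)\sim g(x)$ means $\lim_{x\to\infty}f(x)/g(x)=1$. A density function is a measurable $g:\mathbb{R}\to[0,\infty)$ with $\int_{-\infty}^\infty g(x)\,dx=1$. For integrable $f,g$, $f\otimes g(x):=\int_{-\infty}^{\infty} f(x-u)g(u)\,du$ and $f^{n\otimes}$ is the $n$-fold convolution power; for measures, $\eta*\rho$ is convolution and $\rho^{n*}$ the $n$-th convolution power. The class $\mathbf{L}$ consists of nonnegative measurable $g$ on $\mathbb{R}$ with $g(x)>0$ for all sufficiently large $x$ and $g(x+a)\sim g(x)$ for every $a\in\mathbb{R}$. $\mathcal{L}_d$ is the set of density functions in $\mathbf{L}$; $\mathcal{S}_d$ is the set of $g\in\mathcal{L}_d$ with $g\otimes g(x)\sim 2g(x)$. For $\Delta=(0,c]$, $c>0$: a distribution $\rho$ on $\mathbb{R}$ belongs to $\mathcal{L}_\Delta$ if $x\mapsto\rho((x,x+c])$ belongs to $\mathbf{L}$,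 and to $\mathcal{S}_\Delta$ if $\rho\in\mathcal{L}_\Delta$ and $\rho*\rho((x,x+c])\sim 2\rho((x,x+c])$. $\mathcal{L}_{loc}$ (resp. $\mathcal{S}_{loc}$) is the class of distributions belonging to $\mathcal{L}_\Delta$ (resp. $\mathcal{S}_\Delta$) for every $\Delta=(0,c]$, $c>0$. *)

theory Defs
  imports "HOL-Probability.Probability"
begin

definition asymp_equiv_top :: "(real \<Rightarrow> real) \<Rightarrow> (real \<Rightarrow> real) \<Rightarrow> bool" where
  "asymp_equiv_top f g \<longleftrightarrow> ((\<lambda>x. f x / g x) \<longlongrightarrow> 1) at_top"

definition density_fun :: "(real \<Rightarrow> real) \<Rightarrow> bool" where
  "density_fun g \<longleftrightarrow> g \<in> borel_measurable borel \<and> (\<forall>x. 0 \<le> g x)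
     \<and> (\<integral>\<^sup>+ x. ennreal (g x) \<partial>lborel) = 1"

definition class_L :: "(real \<Rightarrow> real) \<Rightarrow> bool" where
  "class_L g \<longleftrightarrow> g \<in> borel_measurable borel \<and> (\<forall>x. 0 \<le> g x)
     \<and> (\<forall>\<^sub>F x in at_top. g x > 0)
     \<and> (\<forall>a. asymp_equiv_top (\<lambda>x. g (x + a)) g)"

definition fconv :: "(real \<Rightarrow> real) \<Rightarrow> (real \<Rightarrow> real) \<Rightarrow> real \<Rightarrow> real" where
  "fconv f g x = (\<integral>u. f (x - u) * g u \<partial>lborel)"

definition L_d :: "(real \<Rightarrow> real) \<Rightarrow> bool" where
  "L_d g \<longleftrightarrow> density_fun g \<and> class_L g"

definition S_d :: "(real \<Rightarrow> real) \<Rightarrow> bool" where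
  "S_d g \<longleftrightarrow> L_d g \<and> asymp_equiv_top (fconv g g) (\<lambda>x. 2 * g x)"

definition real_distribution' :: "real measure \<Rightarrow> bool" where
  "real_distribution' M \<longleftrightarrow> prob_space M \<and> sets M = sets borel"

definition L_Delta :: "real \<Rightarrow> real measure \<Rightarrow> bool" where
  "L_Delta c \<rho> \<longleftrightarrow> class_L (\<lambda>x. measure \<rho> {x<..x+c})"

definition S_Delta :: "real \<Rightarrow> real measure \<Rightarrow> bool" where
  "S_Delta c \<rho> \<longleftrightarrow> L_Delta c \<rho> \<and>
     asymp_equiv_top (\<lambda>x. measure (\<rho> \<star> \<rho>) {x<..x+c}) (\<lambda>x. 2 * measure \<rho> {x<..x+c})"

definition S_loc :: "real measure \<Rightarrow> bool" where
  "S_loc \<rho> \<longleftrightarrow> (\<forall>c>0. S_Delta c \<rho>)"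

end

theory Submission imports Defs "HOL-Real_Asymp.Real_Asymp" begin


lemma lborel_between:
  fixes a b :: real
  assumes "S \<in> sets borel" "{a<..<b} \<subseteq> S" "S \<subseteq> {a..b}"
  shows "emeasure lborel S = ennreal (max 0 (b - a))"
proof (cases "a \<le> b")
  case True
  have "emeasure lborel {a<..<b} \<le> emeasure lborel S"
    using assms by (intro emeasure_mono) auto
  moreover have "emeasure lborel S \<le> emeasure lborel {a..b}"
    using assms by (intro emeasure_mono) auto
  ultimately show ?thesis using True by (auto intro: antisym)
next
  case False
  then have "S = {}" using assms by auto
  then show ?thesis using False by simp
qed

lemma filterlim_shift: "filterlim (\<lambda>x::real. x + b) at_top at_top"
  using filterlim_tendsto_add_at_top[OF tendsto_const[of b] filterlim_ident] by (simp add: add.commute)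

lemma tendsto_shift: "(f \<longlongrightarrow> l) at_top \<Longrightarrow> ((\<lambda>x::real. f (x + b)) \<longlongrightarrow> l) at_top"
  using filterlim_compose[OF _ filterlim_shift] by blast

lemma eventually_shift: "eventually P (at_top::real filter) \<Longrightarrow> eventually (\<lambda>x. P (x + b)) at_top"
  using filterlim_shift[of b] unfolding filterlim_def le_filter_def eventually_filtermap by auto

definition TT :: "real \<Rightarrow> real \<Rightarrow> real" where
  "TT c t = max 0 (min c t - max 0 (t - c))"

lemma TT_measurable[measurable]: "TT c \<in> borel_measurable borel"
  unfolding TT_def by measurable

lemma TT_nonneg: "0 \<le> TT c t" by (simp add: TT_def)
lemma TT_le: "0 \<le> c \<Longrightarrow> TT c t \<le> c" by (simp add: TT_def)
lemma TT_zero1: "t \<le> 0 \<Longrightarrow> TT c t = 0" by (simp add: TT_def)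
lemma TT_zero2: "2 * c \<le> t \<Longrightarrow> TT c t = 0" by (simp add: TT_def)
lemma TT_sum: "0 \<le> t \<Longrightarrow> t < c \<Longrightarrow> TT c t + TT c (t + c) = c" by (simp add: TT_def)

lemma TT_emeasure:
  fixes x y z c :: real
  assumes "0 < c"
  shows "emeasure lborel {u. y \<le> u \<and> u < y + c \<and> x - z - c < u \<and> u \<le> x - z}
       = ennreal (TT c (x - y - z))"
proof -
  have "emeasure lborel {u. y \<le> u \<and> u < y + c \<and> x - z - c < u \<and> u \<le> x - z}
     = ennreal (max 0 (min (y + c) (x - z) - max y (x - z - c)))"
    by (rule lborel_between) auto
  also have "min (y + c) (x - z) - max y (x - z - c) = min c (x - y - z) - max 0 (x - y - z - c)"
    by (simp add: min_def max_def)
  finally show ?thesis by (simp add: TT_def)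
qed

locale dist0 = prob_space \<mu> for \<mu> :: "real measure" +
  assumes sets_mu[measurable_cong]: "sets \<mu> = sets borel"
    and neg0: "measure \<mu> {..<0} = 0"
begin

lemma space_mu[simp]: "space \<mu> = UNIV"
  using sets_eq_imp_space_eq[OF sets_mu] by simp

lemma prob_UNIV[simp]: "prob UNIV = 1"
  using prob_space by simp

lemma AE_nonneg: "AE y in \<mu>. 0 \<le> y"
proof -
  have "{..<0::real} \<in> null_sets \<mu>"
    using neg0 by (simp add: null_sets_def emeasure_eq_measure sets_mu)
  then show ?thesis by (rule AE_I') auto
qed

definition gg :: "real \<Rightarrow> real \<Rightarrow> real" where
  "gg c x = measure \<mu> {x - c<..x}"

lemma gg_nonneg: "0 \<le> gg c x" by (simp add: gg_def)
lemma gg_le1: "gg c x \<le> 1" by (simp add: gg_def)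

lemma gg_emeasure: "ennreal (gg c x) = emeasure \<mu> {x - c<..x}"
  by (simp add: gg_def emeasure_eq_measure sets_mu)

lemma gg_diff: "0 \<le> c \<Longrightarrow> gg c x = measure \<mu> {..x} - measure \<mu> {..x - c}"
proof -
  assume "0 \<le> c"
  then have "{x - c<..x} = {..x} - {..x - c}" by auto
  then show ?thesis unfolding gg_def using \<open>0 \<le> c\<close>
    by (simp add: finite_measure_Diff sets_mu)
qed

lemma cdf_meas: "(\<lambda>x. measure \<mu> {..x}) \<in> borel_measurable borel"
  by (rule borel_measurable_mono) (auto simp: mono_def sets_mu intro!: finite_measure_mono)

lemma gg_measurable[measurable]: "0 \<le> c \<Longrightarrow> gg c \<in> borel_measurable borel"
proof -
  assume c: "0 \<le> c"
  have m: "(\<lambda>x. measure \<mu> {..x}) \<in> borel_measurable borel" by (rule cdf_meas)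
  have m2: "(\<lambda>x. measure \<mu> {..x - c}) \<in> borel_measurable borel"
    using measurable_compose[of "\<lambda>x. x - c" borel borel, OF _ m] by simp
  have "(\<lambda>x. measure \<mu> {..x} - measure \<mu> {..x - c}) \<in> borel_measurable borel"
    by (rule borel_measurable_diff[OF m m2])
  moreover have "gg c = (\<lambda>x. measure \<mu> {..x} - measure \<mu> {..x - c})"
    using gg_diff[OF c] by (intro ext) simp
  ultimately show ?thesis by simp
qed


lemma bnn:
  assumes [measurable]: "f \<in> borel_measurable borel" and b: "\<And>y. 0 \<le> f y" "\<And>y. f y \<le> B"
  shows "ennreal (\<integral>y. f y \<partial>\<mu>) = (\<integral>\<^sup>+y. ennreal (f y) \<partial>\<mu>)"
proof -
  have "integrable \<mu> f"
    by (rule integrable_const_bound[where B=B]) (use b in auto)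
  then show ?thesis using b by (simp add: nn_integral_eq_integral)
qed

lemma bnn2:
  assumes [measurable]: "case_prod F \<in> borel_measurable (borel \<Otimes>\<^sub>M borel)"
    and b: "\<And>y z. 0 \<le> F y z" "\<And>y z. F y z \<le> B"
  shows "ennreal (\<integral>y. \<integral>z. F y z \<partial>\<mu> \<partial>\<mu>) = (\<integral>\<^sup>+y. \<integral>\<^sup>+z. ennreal (F y z) \<partial>\<mu> \<partial>\<mu>)"
proof -
  have m: "(\<lambda>y. \<integral>z. F y z \<partial>\<mu>) \<in> borel_measurable borel" by measurable
  have B: "0 \<le> B" using b(1)[of 0 0] b(2)[of 0 0] by linarith
  have i: "ennreal (\<integral>z. F y z \<partial>\<mu>) = (\<integral>\<^sup>+z. ennreal (F y z) \<partial>\<mu>)" for y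
    by (rule bnn) (use b in auto)
  have "ennreal (\<integral>y. \<integral>z. F y z \<partial>\<mu> \<partial>\<mu>) = (\<integral>\<^sup>+y. ennreal (\<integral>z. F y z \<partial>\<mu>) \<partial>\<mu>)"
  proof (rule bnn[OF m])
    show "0 \<le> \<integral>z. F y z \<partial>\<mu>" for y using b by (simp add: integral_nonneg)
    show "(\<integral>z. F y z \<partial>\<mu>) \<le> B" for y
    proof -
      have "(\<integral>z. F y z \<partial>\<mu>) \<le> (\<integral>z. B \<partial>\<mu>)"
        by (rule integral_mono) (use b B in \<open>auto intro!: integrable_const_bound[where B=B]\<close>)
      then show ?thesis by simp
    qed
  qed
  also have "\<dots> = (\<integral>\<^sup>+y. \<integral>\<^sup>+z. ennreal (F y z) \<partial>\<mu> \<partial>\<mu>)" by (simp add: i)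
  finally show ?thesis .
qed

definition kk :: "real \<Rightarrow> real \<Rightarrow> real" where
  "kk c v = (\<integral>z. TT c (v - z) \<partial>\<mu>)"
definition HH :: "real \<Rightarrow> real \<Rightarrow> real" where
  "HH c x = measure (\<mu> \<star> \<mu>) {x - c<..x}"
definition KK :: "real \<Rightarrow> real \<Rightarrow> real" where
  "KK c x = (\<integral>y. \<integral>z. TT c (x - y - z) \<partial>\<mu> \<partial>\<mu>)"
definition AA :: "real \<Rightarrow> real \<Rightarrow> real \<Rightarrow> real" where
  "AA c a x = (\<integral>y. indicator {..a} y * gg c (x - y) \<partial>\<mu>)"
definition AK :: "real \<Rightarrow> real \<Rightarrow> real \<Rightarrow> real" where
  "AK c a x = (\<integral>y. indicator {..a} y * kk c (x - y) \<partial>\<mu>)"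
definition MM :: "real \<Rightarrow> real \<Rightarrow> real \<Rightarrow> real" where
  "MM c a x = (\<integral>y. \<integral>z. indicator {a<..} y * indicator {a<..} z * indicator {x - c<..x} (y + z) \<partial>\<mu> \<partial>\<mu>)"
definition MK :: "real \<Rightarrow> real \<Rightarrow> real \<Rightarrow> real" where
  "MK c a x = (\<integral>y. \<integral>z. indicator {a<..} y * indicator {a<..} z * TT c (x - y - z) \<partial>\<mu> \<partial>\<mu>)"

lemma kk_measurable[measurable]: "kk c \<in> borel_measurable borel"
  unfolding kk_def by measurable

lemma E_kk: "0 \<le> c \<Longrightarrow> ennreal (kk c v) = (\<integral>\<^sup>+z. ennreal (TT c (v - z)) \<partial>\<mu>)"
  unfolding kk_def by (rule bnn[where B=c]) (auto simp: TT_nonneg TT_le)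

lemma kk_nonneg: "0 \<le> kk c v"
  unfolding kk_def by (simp add: integral_nonneg TT_nonneg)

lemma E_KK: "0 \<le> c \<Longrightarrow> ennreal (KK c x) = (\<integral>\<^sup>+y. \<integral>\<^sup>+z. ennreal (TT c (x - y - z)) \<partial>\<mu> \<partial>\<mu>)"
  unfolding KK_def by (rule bnn2[where B=c]) (auto simp: TT_nonneg TT_le)

lemma E_MK: "0 \<le> c \<Longrightarrow> ennreal (MK c a x) = (\<integral>\<^sup>+y. \<integral>\<^sup>+z. ennreal (indicator {a<..} y * indicator {a<..} z * TT c (x - y - z)) \<partial>\<mu> \<partial>\<mu>)"
  unfolding MK_def by (rule bnn2[where B=c]) (auto simp: TT_nonneg TT_le indicator_def)

lemma E_MM: "ennreal (MM c a x) = (\<integral>\<^sup>+y. \<integral>\<^sup>+z. ennreal (indicator {a<..} y * indicator {a<..} z * indicator {x - c<..x} (y + z)) \<partial>\<mu> \<partial>\<mu>)"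
  unfolding MM_def by (rule bnn2[where B=1]) (auto simp: indicator_def)

lemma E_AA: "0 \<le> c \<Longrightarrow> ennreal (AA c a x) = (\<integral>\<^sup>+y. ennreal (indicator {..a} y * gg c (x - y)) \<partial>\<mu>)"
  unfolding AA_def by (rule bnn[where B=1]) (auto simp: indicator_def gg_nonneg gg_le1)

lemma E_AK: "0 \<le> c \<Longrightarrow> ennreal (AK c a x) = (\<integral>\<^sup>+y. ennreal (indicator {..a} y * kk c (x - y)) \<partial>\<mu>)"
proof -
  assume c: "0 \<le> c"
  have "kk c v \<le> c" for v
  proof -
    have "kk c v \<le> (\<integral>z. c \<partial>\<mu>)" unfolding kk_def
      by (rule integral_mono) (auto simp: TT_le c intro!: integrable_const_bound[where B=c] simp: TT_nonneg)
    then show ?thesis by simp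
  qed
  then show ?thesis
    unfolding AK_def by (intro bnn[where B=c]) (auto simp: indicator_def kk_nonneg c)
qed

lemma gg_nn: "ennreal (gg c v) = (\<integral>\<^sup>+z. indicator {v - c<..v} z \<partial>\<mu>)"
  by (simp add: gg_emeasure sets_mu)

lemma E_HH: "ennreal (HH c x) = (\<integral>\<^sup>+y. \<integral>\<^sup>+z. indicator {x - c<..x} (y + z) \<partial>\<mu> \<partial>\<mu>)"
proof -
  have fm: "finite_measure \<mu>" by (rule finite_measure_axioms)
  interpret C: finite_measure "\<mu> \<star> \<mu>" by (rule convolution_finite) (auto simp: fm sets_mu)
  have "ennreal (HH c x) = emeasure (\<mu> \<star> \<mu>) {x - c<..x}"
    unfolding HH_def by (simp add: C.emeasure_eq_measure)
  also have "\<dots> = (\<integral>\<^sup>+y. \<integral>\<^sup>+z. indicator {x - c<..x} (y + z) \<partial>\<mu> \<partial>\<mu>)"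
    by (rule convolution_emeasure') (auto simp: fm sets_mu)
  finally show ?thesis .
qed

lemma HH_integral: "HH c x = (\<integral>y. gg c (x - y) \<partial>\<mu>)" if "0 \<le> c"
proof -
  have "ennreal (HH c x) = (\<integral>\<^sup>+y. ennreal (gg c (x - y)) \<partial>\<mu>)"
    unfolding E_HH gg_nn
    by (intro nn_integral_cong) (auto intro!: nn_integral_cong split: split_indicator)
  also have "\<dots> = ennreal (\<integral>y. gg c (x - y) \<partial>\<mu>)"
    by (rule bnn[symmetric, where B=1]) (use that in \<open>auto simp: gg_nonneg gg_le1\<close>)
  finally show ?thesis
    by (subst (asm) ennreal_inj) (auto simp: HH_def integral_nonneg gg_nonneg)
qed


lemma decomp:
  fixes \<phi> :: "real \<Rightarrow> ennreal"
  assumes [measurable]: "\<phi> \<in> borel_measurable borel" and a: "0 \<le> a"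
    and z: "\<And>w. w \<le> 2 * a \<Longrightarrow> \<phi> w = 0"
  shows "(\<integral>\<^sup>+y. \<integral>\<^sup>+z. \<phi> (y + z) \<partial>\<mu> \<partial>\<mu>) =
    2 * (\<integral>\<^sup>+y. indicator {..a} y * (\<integral>\<^sup>+z. \<phi> (y + z) \<partial>\<mu>) \<partial>\<mu>) +
    (\<integral>\<^sup>+y. \<integral>\<^sup>+z. indicator {a<..} y * indicator {a<..} z * \<phi> (y + z) \<partial>\<mu> \<partial>\<mu>)"
proof -
  interpret P: pair_sigma_finite \<mu> \<mu> ..
  have pw: "\<phi> (y + z) = indicator {..a} y * \<phi> (y + z) + indicator {..a} z * \<phi> (y + z)
      + indicator {a<..} y * indicator {a<..} z * \<phi> (y + z)" if "0 \<le> y" "0 \<le> z" for y z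
  proof (cases "y \<le> a")
    case True
    show ?thesis
    proof (cases "z \<le> a")
      case True
      with \<open>y \<le> a\<close> have "\<phi> (y + z) = 0" by (intro z) auto
      then show ?thesis by simp
    qed (use True in \<open>auto simp: indicator_def\<close>)
  qed (auto simp: indicator_def)
  have "(\<integral>\<^sup>+y. \<integral>\<^sup>+z. \<phi> (y + z) \<partial>\<mu> \<partial>\<mu>) = (\<integral>\<^sup>+y. \<integral>\<^sup>+z. indicator {..a} y * \<phi> (y + z) + indicator {..a} z * \<phi> (y + z)
      + indicator {a<..} y * indicator {a<..} z * \<phi> (y + z) \<partial>\<mu> \<partial>\<mu>)"
  proof (rule nn_integral_cong_AE)
    show "AE y in \<mu>. (\<integral>\<^sup>+z. \<phi> (y + z) \<partial>\<mu>) = (\<integral>\<^sup>+z. indicator {..a} y * \<phi> (y + z) + indicator {..a} z * \<phi> (y + z)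
      + indicator {a<..} y * indicator {a<..} z * \<phi> (y + z) \<partial>\<mu>)"
      using AE_nonneg
    proof eventually_elim
      case (elim y)
      show ?case
        by (rule nn_integral_cong_AE) (use AE_nonneg in eventually_elim, use pw elim in auto)
    qed
  qed
  also have "\<dots> = (\<integral>\<^sup>+y. (\<integral>\<^sup>+z. indicator {..a} y * \<phi> (y + z) \<partial>\<mu>) + (\<integral>\<^sup>+z. indicator {..a} z * \<phi> (y + z) \<partial>\<mu>)
      + (\<integral>\<^sup>+z. indicator {a<..} y * indicator {a<..} z * \<phi> (y + z) \<partial>\<mu>) \<partial>\<mu>)"
    by (intro nn_integral_cong) (simp add: nn_integral_add)
  also have "\<dots> = (\<integral>\<^sup>+y. \<integral>\<^sup>+z. indicator {..a} y * \<phi> (y + z) \<partial>\<mu> \<partial>\<mu>) + (\<integral>\<^sup>+y. \<integral>\<^sup>+z. indicator {..a} z * \<phi> (y + z) \<partial>\<mu> \<partial>\<mu>)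
      + (\<integral>\<^sup>+y. \<integral>\<^sup>+z. indicator {a<..} y * indicator {a<..} z * \<phi> (y + z) \<partial>\<mu> \<partial>\<mu>)"
    by (simp add: nn_integral_add)
  also have "(\<integral>\<^sup>+y. \<integral>\<^sup>+z. indicator {..a} z * \<phi> (y + z) \<partial>\<mu> \<partial>\<mu>) = (\<integral>\<^sup>+z. \<integral>\<^sup>+y. indicator {..a} z * \<phi> (y + z) \<partial>\<mu> \<partial>\<mu>)"
    by (rule P.Fubini') measurable
  also have "\<dots> = (\<integral>\<^sup>+y. \<integral>\<^sup>+z. indicator {..a} y * \<phi> (y + z) \<partial>\<mu> \<partial>\<mu>)"
    by (simp add: add.commute)
  also have "(\<integral>\<^sup>+y. \<integral>\<^sup>+z. indicator {..a} y * \<phi> (y + z) \<partial>\<mu> \<partial>\<mu>) = (\<integral>\<^sup>+y. indicator {..a} y * (\<integral>\<^sup>+z. \<phi> (y + z) \<partial>\<mu>) \<partial>\<mu>)"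
    by (simp add: nn_integral_cmult)
  finally show ?thesis by (simp add: mult_2)
qed

lemma pred_Ioc[measurable (raw)]:
  fixes f g h :: "'a \<Rightarrow> real"
  assumes [measurable]: "f \<in> borel_measurable M" "g \<in> borel_measurable M" "h \<in> borel_measurable M"
  shows "Measurable.pred M (\<lambda>x. f x \<in> {g x<..h x})"
  unfolding greaterThanAtMost_iff by measurable

lemma pred_Ico[measurable (raw)]:
  fixes f g h :: "'a \<Rightarrow> real"
  assumes [measurable]: "f \<in> borel_measurable M" "g \<in> borel_measurable M" "h \<in> borel_measurable M"
  shows "Measurable.pred M (\<lambda>x. f x \<in> {g x..<h x})"
  unfolding atLeastLessThan_iff by measurable

lemma TT_nn0:
  assumes "0 < c"
  shows "ennreal (TT c (w - z)) = (\<integral>\<^sup>+u. indicator {0..<c} u * indicator {w - z - c<..w - z} u \<partial>lborel)"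
proof -
  have "(\<lambda>u. indicator {0..<c} u * indicator {w - z - c<..w - z} u :: ennreal)
      = indicator {u. 0 \<le> u \<and> u < 0 + c \<and> w - z - c < u \<and> u \<le> w - z}"
    by (auto simp: indicator_def fun_eq_iff)
  moreover have "{u. 0 \<le> u \<and> u < 0 + c \<and> w - z - c < u \<and> u \<le> w - z} \<in> sets lborel"
    by measurable
  ultimately show ?thesis using TT_emeasure[OF assms, of 0 w z] by simp
qed

lemma TT_nn:
  assumes "0 < c"
  shows "ennreal (TT c (x - y - z)) = (\<integral>\<^sup>+u. indicator {y..<y + c} u * indicator {x - z - c<..x - z} u \<partial>lborel)"
proof -
  have "(\<integral>\<^sup>+u. indicator {y..<y + c} u * indicator {x - z - c<..x - z} u \<partial>lborel)
     = emeasure lborel {u. y \<le> u \<and> u < y + c \<and> x - z - c < u \<and> u \<le> x - z}"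
  proof -
    have "(\<lambda>u. indicator {y..<y + c} u * indicator {x - z - c<..x - z} u :: ennreal)
      = indicator {u. y \<le> u \<and> u < y + c \<and> x - z - c < u \<and> u \<le> x - z}"
      by (auto simp: indicator_def fun_eq_iff)
    moreover have "{u. y \<le> u \<and> u < y + c \<and> x - z - c < u \<and> u \<le> x - z} \<in> sets lborel"
      by measurable
    ultimately show ?thesis by simp
  qed
  then show ?thesis using TT_emeasure[OF assms] by simp
qed


lemma kk_lborel:
  assumes c: "0 < c"
  shows "ennreal (kk c v) = (\<integral>\<^sup>+u. indicator {0..<c} u * ennreal (gg c (v - u)) \<partial>lborel)"
proof -
  interpret P: pair_sigma_finite lborel \<mu> ..
  have "ennreal (kk c v) = (\<integral>\<^sup>+z. \<integral>\<^sup>+u. indicator {0..<c} u * indicator {v - z - c<..v - z} u \<partial>lborel \<partial>\<mu>)"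
    unfolding E_kk[OF less_imp_le[OF c]] by (intro nn_integral_cong TT_nn0[OF c])
  also have "\<dots> = (\<integral>\<^sup>+u. \<integral>\<^sup>+z. indicator {0..<c} u * indicator {v - z - c<..v - z} u \<partial>\<mu> \<partial>lborel)"
    by (rule P.Fubini') measurable
  also have "\<dots> = (\<integral>\<^sup>+u. indicator {0..<c} u * (\<integral>\<^sup>+z. indicator {v - u - c<..v - u} z \<partial>\<mu>) \<partial>lborel)"
    by (subst nn_integral_cmult[symmetric]) (auto intro!: nn_integral_cong split: split_indicator)
  also have "\<dots> = (\<integral>\<^sup>+u. indicator {0..<c} u * ennreal (gg c (v - u)) \<partial>lborel)"
    by (simp add: gg_nn)
  finally show ?thesis .
qed

lemma KK_lborel:
  assumes c: "0 < c"
  shows "ennreal (KK c x) = (\<integral>\<^sup>+u. indicator {0..<c} u * ennreal (HH c (x - u)) \<partial>lborel)"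
proof -
  interpret P: pair_sigma_finite lborel \<mu> ..
  interpret Q: pair_sigma_finite \<mu> lborel ..
  have "ennreal (KK c x) = (\<integral>\<^sup>+y. \<integral>\<^sup>+z. \<integral>\<^sup>+u. indicator {0..<c} u * indicator {x - y - z - c<..x - y - z} u \<partial>lborel \<partial>\<mu> \<partial>\<mu>)"
    unfolding E_KK[OF less_imp_le[OF c]] by (intro nn_integral_cong TT_nn0[OF c])
  also have "\<dots> = (\<integral>\<^sup>+y. \<integral>\<^sup>+u. \<integral>\<^sup>+z. indicator {0..<c} u * indicator {x - y - z - c<..x - y - z} u \<partial>\<mu> \<partial>lborel \<partial>\<mu>)"
    by (intro nn_integral_cong P.Fubini') measurable
  also have "\<dots> = (\<integral>\<^sup>+u. \<integral>\<^sup>+y. \<integral>\<^sup>+z. indicator {0..<c} u * indicator {x - y - z - c<..x - y - z} u \<partial>\<mu> \<partial>\<mu> \<partial>lborel)"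
    by (rule P.Fubini') measurable
  also have "\<dots> = (\<integral>\<^sup>+u. indicator {0..<c} u * (\<integral>\<^sup>+y. \<integral>\<^sup>+z. indicator {x - u - c<..x - u} (y + z) \<partial>\<mu> \<partial>\<mu>) \<partial>lborel)"
    by (subst nn_integral_cmult[symmetric], simp, intro nn_integral_cong)
       (subst nn_integral_cmult[symmetric], auto intro!: nn_integral_cong split: split_indicator)
  also have "\<dots> = (\<integral>\<^sup>+u. indicator {0..<c} u * ennreal (HH c (x - u)) \<partial>lborel)"
    by (simp add: E_HH)
  finally show ?thesis .
qed

lemma conv_tonelli:
  fixes \<alpha> \<beta> :: "real \<Rightarrow> ennreal"
  assumes c: "0 < c" and [measurable]: "\<alpha> \<in> borel_measurable borel" "\<beta> \<in> borel_measurable borel"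
  shows "(\<integral>\<^sup>+u. (\<integral>\<^sup>+y. \<alpha> y * indicator {u - c<..u} y \<partial>\<mu>) * (\<integral>\<^sup>+z. \<beta> z * indicator {x - u - c<..x - u} z \<partial>\<mu>) \<partial>lborel)
    = (\<integral>\<^sup>+y. \<integral>\<^sup>+z. \<alpha> y * \<beta> z * ennreal (TT c (x - y - z)) \<partial>\<mu> \<partial>\<mu>)"
proof -
  interpret P: pair_sigma_finite lborel \<mu> ..
  interpret Q: pair_sigma_finite \<mu> lborel ..
  have "(\<integral>\<^sup>+u. (\<integral>\<^sup>+y. \<alpha> y * indicator {u - c<..u} y \<partial>\<mu>) * (\<integral>\<^sup>+z. \<beta> z * indicator {x - u - c<..x - u} z \<partial>\<mu>) \<partial>lborel)
    = (\<integral>\<^sup>+u. \<integral>\<^sup>+y. \<integral>\<^sup>+z. \<alpha> y * \<beta> z * (indicator {y..<y + c} u * indicator {x - z - c<..x - z} u) \<partial>\<mu> \<partial>\<mu> \<partial>lborel)"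
    by (subst nn_integral_multc[symmetric], simp, intro nn_integral_cong)
       (subst nn_integral_cmult[symmetric], auto intro!: nn_integral_cong split: split_indicator)
  also have "\<dots> = (\<integral>\<^sup>+y. \<integral>\<^sup>+u. \<integral>\<^sup>+z. \<alpha> y * \<beta> z * (indicator {y..<y + c} u * indicator {x - z - c<..x - z} u) \<partial>\<mu> \<partial>lborel \<partial>\<mu>)"
    by (rule Q.Fubini') measurable
  also have "\<dots> = (\<integral>\<^sup>+y. \<integral>\<^sup>+z. \<integral>\<^sup>+u. \<alpha> y * \<beta> z * (indicator {y..<y + c} u * indicator {x - z - c<..x - z} u) \<partial>lborel \<partial>\<mu> \<partial>\<mu>)"
    by (intro nn_integral_cong Q.Fubini') measurable
  also have "\<dots> = (\<integral>\<^sup>+y. \<integral>\<^sup>+z. \<alpha> y * \<beta> z * ennreal (TT c (x - y - z)) \<partial>\<mu> \<partial>\<mu>)"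
    by (simp add: nn_integral_cmult TT_nn[OF c])
  finally show ?thesis .
qed


lemma AA_nonneg: "0 \<le> AA c a x"
  unfolding AA_def by (auto intro!: integral_nonneg simp: gg_nonneg)
lemma AK_nonneg: "0 \<le> AK c a x"
  unfolding AK_def by (auto intro!: integral_nonneg simp: kk_nonneg)
lemma MM_nonneg: "0 \<le> MM c a x"
  unfolding MM_def by (auto intro!: integral_nonneg)
lemma MK_nonneg: "0 \<le> MK c a x"
  unfolding MK_def by (auto intro!: integral_nonneg simp: TT_nonneg)
lemma HH_nonneg: "0 \<le> HH c x"
  unfolding HH_def by simp
lemma KK_nonneg: "0 \<le> KK c x"
  unfolding KK_def by (auto intro!: integral_nonneg simp: TT_nonneg)

lemma ennreal_2: "2 * ennreal a = ennreal (2 * a)"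
  by (subst ennreal_mult') auto

lemma HH_decomp:
  assumes c: "0 < c" and a: "0 \<le> a" and x: "2 * a \<le> x - c"
  shows "HH c x = 2 * AA c a x + MM c a x"
proof -
  let ?\<phi> = "\<lambda>w. indicator {x - c<..x} w :: ennreal"
  have "ennreal (HH c x) = 2 * (\<integral>\<^sup>+y. indicator {..a} y * (\<integral>\<^sup>+z. ?\<phi> (y + z) \<partial>\<mu>) \<partial>\<mu>) +
    (\<integral>\<^sup>+y. \<integral>\<^sup>+z. indicator {a<..} y * indicator {a<..} z * ?\<phi> (y + z) \<partial>\<mu> \<partial>\<mu>)"
    unfolding E_HH by (rule decomp) (use a x in \<open>auto simp: indicator_def\<close>)
  also have "(\<lambda>y. (\<integral>\<^sup>+z. ?\<phi> (y + z) \<partial>\<mu>)) = (\<lambda>y. ennreal (gg c (x - y)))"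
    unfolding gg_nn by (intro ext nn_integral_cong) (auto split: split_indicator)
  also have "(\<integral>\<^sup>+y. indicator {..a} y * ennreal (gg c (x - y)) \<partial>\<mu>) = ennreal (AA c a x)"
    unfolding E_AA[OF less_imp_le[OF c]] by (intro nn_integral_cong) (auto simp: indicator_def)
  also have "(\<integral>\<^sup>+y. \<integral>\<^sup>+z. indicator {a<..} y * indicator {a<..} z * ?\<phi> (y + z) \<partial>\<mu> \<partial>\<mu>) = ennreal (MM c a x)"
    unfolding E_MM by (intro nn_integral_cong) (auto simp: indicator_def)
  finally have "ennreal (HH c x) = ennreal (2 * AA c a x + MM c a x)"
    by (simp add: ennreal_2 ennreal_plus[symmetric] AA_nonneg MM_nonneg del: ennreal_plus)
  then show ?thesis
    by (subst (asm) ennreal_inj) (auto simp: HH_nonneg AA_nonneg MM_nonneg)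
qed

lemma KK_decomp:
  assumes c: "0 < c" and a: "0 \<le> a" and x: "2 * a \<le> x - 2 * c"
  shows "KK c x = 2 * AK c a x + MK c a x"
proof -
  let ?\<phi> = "\<lambda>w. ennreal (TT c (x - w))"
  have "ennreal (KK c x) = (\<integral>\<^sup>+y. \<integral>\<^sup>+z. ?\<phi> (y + z) \<partial>\<mu> \<partial>\<mu>)"
    using c by (simp add: E_KK diff_diff_eq)
  also have "\<dots> = 2 * (\<integral>\<^sup>+y. indicator {..a} y * (\<integral>\<^sup>+z. ?\<phi> (y + z) \<partial>\<mu>) \<partial>\<mu>) +
    (\<integral>\<^sup>+y. \<integral>\<^sup>+z. indicator {a<..} y * indicator {a<..} z * ?\<phi> (y + z) \<partial>\<mu> \<partial>\<mu>)"
    by (rule decomp) (use a x in \<open>auto simp: TT_zero2\<close>)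
  also have "(\<lambda>y. (\<integral>\<^sup>+z. ?\<phi> (y + z) \<partial>\<mu>)) = (\<lambda>y. ennreal (kk c (x - y)))"
    using c by (simp add: E_kk diff_diff_eq)
  also have "(\<integral>\<^sup>+y. indicator {..a} y * ennreal (kk c (x - y)) \<partial>\<mu>) = ennreal (AK c a x)"
    unfolding E_AK[OF less_imp_le[OF c]] by (intro nn_integral_cong) (auto simp: indicator_def)
  also have "(\<integral>\<^sup>+y. \<integral>\<^sup>+z. indicator {a<..} y * indicator {a<..} z * ?\<phi> (y + z) \<partial>\<mu> \<partial>\<mu>) = ennreal (MK c a x)"
    using c unfolding E_MK[OF less_imp_le[OF c]]
    by (intro nn_integral_cong) (auto simp: indicator_def diff_diff_eq)
  finally have "ennreal (KK c x) = ennreal (2 * AK c a x + MK c a x)"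
    by (simp add: ennreal_2 ennreal_plus[symmetric] AK_nonneg MK_nonneg del: ennreal_plus)
  then show ?thesis
    by (subst (asm) ennreal_inj) (auto simp: KK_nonneg AK_nonneg MK_nonneg)
qed

lemma MM_MK:
  assumes c: "0 < c"
  shows "c * MM c a x \<le> MK c a x + MK c a (x + c)"
proof -
  have pw: "ennreal c * ennreal (indicator {a<..} y * indicator {a<..} z * indicator {x - c<..x} (y + z))
    \<le> ennreal (indicator {a<..} y * indicator {a<..} z * TT c (x - y - z)) +
       ennreal (indicator {a<..} y * indicator {a<..} z * TT c (x + c - y - z))" for y z
  proof -
    have r: "c * (indicator {a<..} y * indicator {a<..} z * indicator {x - c<..x} (y + z))
      \<le> indicator {a<..} y * indicator {a<..} z * TT c (x - y - z) +
         indicator {a<..} y * indicator {a<..} z * TT c (x + c - y - z)"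
    proof (cases "y + z \<in> {x - c<..x}")
      case True
      then have "TT c (x - y - z) + TT c (x - y - z + c) = c" by (intro TT_sum) auto
      then show ?thesis using True by (auto simp: indicator_def algebra_simps)
    qed (auto simp: indicator_def TT_nonneg)
    have "ennreal c * ennreal (indicator {a<..} y * indicator {a<..} z * indicator {x - c<..x} (y + z))
      = ennreal (c * (indicator {a<..} y * indicator {a<..} z * indicator {x - c<..x} (y + z)))"
      using c by (simp add: ennreal_mult)
    also have "\<dots> \<le> ennreal (indicator {a<..} y * indicator {a<..} z * TT c (x - y - z) +
         indicator {a<..} y * indicator {a<..} z * TT c (x + c - y - z))"
      by (rule ennreal_leI[OF r])
    also have "\<dots> = ennreal (indicator {a<..} y * indicator {a<..} z * TT c (x - y - z)) +
       ennreal (indicator {a<..} y * indicator {a<..} z * TT c (x + c - y - z))"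
      by (rule ennreal_plus) (auto simp: TT_nonneg)
    finally show ?thesis .
  qed
  have "ennreal (c * MM c a x) = ennreal c * ennreal (MM c a x)"
    by (intro ennreal_mult) (use c MM_nonneg in auto)
  also have "\<dots> = (\<integral>\<^sup>+y. \<integral>\<^sup>+z. ennreal c * ennreal (indicator {a<..} y * indicator {a<..} z * indicator {x - c<..x} (y + z)) \<partial>\<mu> \<partial>\<mu>)"
    unfolding E_MM by (simp add: nn_integral_cmult)
  also have "\<dots> \<le> (\<integral>\<^sup>+y. \<integral>\<^sup>+z. ennreal (indicator {a<..} y * indicator {a<..} z * TT c (x - y - z)) +
       ennreal (indicator {a<..} y * indicator {a<..} z * TT c (x + c - y - z)) \<partial>\<mu> \<partial>\<mu>)"
    by (intro nn_integral_mono pw)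
  also have "\<dots> = ennreal (MK c a x) + ennreal (MK c a (x + c))"
    using c by (simp add: nn_integral_add E_MK)
  also have "\<dots> = ennreal (MK c a x + MK c a (x + c))"
    by (simp add: MK_nonneg)
  finally show ?thesis
    by (subst (asm) ennreal_le_iff) (auto simp: MK_nonneg)
qed


lemma cdf_lim: "((\<lambda>a. measure \<mu> {..a}) \<longlongrightarrow> 1) at_top"
proof -
  interpret R: real_distribution \<mu> by unfold_locales (simp add: sets_mu)
  show ?thesis using R.cdf_lim_at_top_prob unfolding cdf_def by simp
qed

lemma gg_cover:
  assumes c: "0 < c"
  shows "measure \<mu> {x - real n * c<..x} \<le> (\<Sum>j<n. gg c (x - real j * c))"
proof (induction n)
  case 0 then show ?case by simp
next
  case (Suc n)
  have "{x - real (Suc n) * c<..x} \<subseteq> {x - real n * c<..x} \<union> {x - real n * c - c<..x - real n * c}"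
    by (auto simp: algebra_simps)
  then have "measure \<mu> {x - real (Suc n) * c<..x} \<le> measure \<mu> ({x - real n * c<..x} \<union> {x - real n * c - c<..x - real n * c})"
    by (intro finite_measure_mono) (auto simp: sets_mu)
  also have "\<dots> \<le> measure \<mu> {x - real n * c<..x} + gg c (x - real n * c)"
    unfolding gg_def by (rule measure_Un_le) (auto simp: sets_mu)
  also have "\<dots> \<le> (\<Sum>j<Suc n. gg c (x - real j * c))"
    using Suc by simp
  finally show ?case .
qed

end

locale distL = dist0 +
  fixes c :: real
  assumes c_pos: "0 < c" and gL: "class_L (gg c)"
begin

lemma g_pos: "\<forall>\<^sub>F x in at_top. 0 < gg c x"
  using gL unfolding class_L_def by auto

lemma g_shift: "((\<lambda>x. gg c (x + b) / gg c x) \<longlongrightarrow> 1) at_top"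
  using gL unfolding class_L_def asymp_equiv_top_def by auto

lemma g_shift_le: "\<forall>\<^sub>F x in at_top. gg c (x + b) \<le> 2 * gg c x"
proof -
  have "\<forall>\<^sub>F x in at_top. gg c (x + b) / gg c x < 2"
    using g_shift[of b] by (rule order_tendstoD) simp
  then show ?thesis using g_pos
    by eventually_elim (auto simp: divide_less_eq)
qed

lemma g_bound:
  assumes b: "0 \<le> b"
  shows "\<exists>B. \<forall>\<^sub>F x in at_top. \<forall>y\<in>{0..b}. gg c (x - y) \<le> B * gg c x"
proof -
  define N where "N = nat \<lceil>b / c\<rceil> + 1"
  have Nc: "b + c \<le> real N * c"
  proof -
    have "b / c \<le> real (nat \<lceil>b / c\<rceil>)" by linarith
    then have "b \<le> real (nat \<lceil>b / c\<rceil>) * c" using c_pos by (simp add: divide_le_eq)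
    then show ?thesis unfolding N_def by (simp add: algebra_simps)
  qed
  have ev: "\<forall>\<^sub>F x in at_top. \<forall>j\<in>{..<N}. gg c (x + (- (real j * c))) \<le> 2 * gg c x"
    by (intro eventually_ball_finite ballI g_shift_le) auto
  have "\<forall>\<^sub>F x in at_top. \<forall>y\<in>{0..b}. gg c (x - y) \<le> (2 * real N) * gg c x"
    using ev
  proof eventually_elim
    case (elim x)
    show ?case
    proof
      fix y assume y: "y \<in> {0..b}"
      have "gg c (x - y) \<le> measure \<mu> {x - real N * c<..x}"
        unfolding gg_def using y Nc by (intro finite_measure_mono) (auto simp: sets_mu)
      also have "\<dots> \<le> (\<Sum>j<N. gg c (x - real j * c))" by (rule gg_cover[OF c_pos])
      also have "\<dots> \<le> (\<Sum>j<N. 2 * gg c x)"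
        by (intro sum_mono) (use elim in auto)
      also have "\<dots> = (2 * real N) * gg c x" by simp
      finally show "gg c (x - y) \<le> (2 * real N) * gg c x" .
    qed
  qed
  then show ?thesis by blast
qed


lemma g_meas[measurable]: "gg c \<in> borel_measurable borel"
  using c_pos by (intro gg_measurable) simp

lemma loc_lim:
  fixes F :: "real \<Rightarrow> real \<Rightarrow> real"
  assumes a: "0 \<le> a" and meas[measurable]: "\<And>x. F x \<in> borel_measurable borel"
    and lim: "\<And>y. 0 \<le> y \<Longrightarrow> y \<le> a \<Longrightarrow> ((\<lambda>x. F x y) \<longlongrightarrow> L) at_top"
    and bnd: "\<forall>\<^sub>F x in at_top. \<forall>y\<in>{0..a}. \<bar>F x y\<bar> \<le> B"
  shows "((\<lambda>x. \<integral>y. indicator {..a} y * F x y \<partial>\<mu>) \<longlongrightarrow> L * measure \<mu> {..a}) at_top"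
proof -
  have "((\<lambda>x. \<integral>y. indicator {..a} y * F x y \<partial>\<mu>) \<longlongrightarrow> (\<integral>y. indicator {..a} y * L \<partial>\<mu>)) at_top"
  proof (rule integral_dominated_convergence_at_top[where w="\<lambda>_. \<bar>B\<bar>"])
    show "(\<lambda>y. indicator {..a} y * L) \<in> borel_measurable \<mu>" by measurable
    show "(\<lambda>y. indicator {..a} y * F t y) \<in> borel_measurable \<mu>" for t by measurable
    show "integrable \<mu> (\<lambda>_. \<bar>B\<bar>)" by simp
    show "AE y in \<mu>. ((\<lambda>x. indicator {..a} y * F x y) \<longlongrightarrow> indicator {..a} y * L) at_top"
      using AE_nonneg
    proof eventually_elim
      case (elim y)
      show ?case
      proof (cases "y \<le> a")
        case True
        then show ?thesis using lim[OF elim True] by (simp add: indicator_def)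
      qed (simp add: indicator_def)
    qed
    show "\<forall>\<^sub>F x in at_top. AE y in \<mu>. norm (indicator {..a} y * F x y) \<le> \<bar>B\<bar>"
      using bnd
    proof eventually_elim
      case (elim x)
      then have xb: "\<forall>y\<in>{0..a}. \<bar>F x y\<bar> \<le> B" .
      show ?case using AE_nonneg
      proof eventually_elim
        case (elim y)
        show ?case
        proof (cases "y \<le> a")
          case True
          then have "\<bar>F x y\<bar> \<le> B" using xb elim by auto
          then show ?thesis using True by (simp add: indicator_def)
        qed (simp add: indicator_def)
      qed
    qed
  qed
  also have "(\<integral>y. indicator {..a} y * L \<partial>\<mu>) = L * measure \<mu> {..a}"
    by (simp add: sets_mu)
  finally show ?thesis .
qed

lemma AA_lim:
  assumes a: "0 \<le> a"
  shows "((\<lambda>x. AA c a x / gg c x) \<longlongrightarrow> measure \<mu> {..a}) at_top"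
proof -
  obtain B where B: "\<forall>\<^sub>F x in at_top. \<forall>y\<in>{0..a}. gg c (x - y) \<le> B * gg c x"
    using g_bound[OF a] by blast
  have eq: "AA c a x / gg c x = (\<integral>y. indicator {..a} y * (gg c (x - y) / gg c x) \<partial>\<mu>)" for x
    unfolding AA_def by (subst integral_divide_zero[symmetric]) simp
  have "((\<lambda>x. \<integral>y. indicator {..a} y * (gg c (x - y) / gg c x) \<partial>\<mu>) \<longlongrightarrow> 1 * measure \<mu> {..a}) at_top"
  proof (rule loc_lim[OF a, where B=B])
    show "(\<lambda>y. gg c (x - y) / gg c x) \<in> borel_measurable borel" for x by measurable
    show "((\<lambda>x. gg c (x - y) / gg c x) \<longlongrightarrow> 1) at_top" for y
      using g_shift[of "-y"] by simp
    show "\<forall>\<^sub>F x in at_top. \<forall>y\<in>{0..a}. \<bar>gg c (x - y) / gg c x\<bar> \<le> B"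
      using B g_pos by eventually_elim (auto simp: divide_le_eq gg_nonneg)
  qed
  then show ?thesis unfolding eq by simp
qed

lemma kk_real: "kk c v = (\<integral>u. indicator {0..<c} u * gg c (v - u) \<partial>lborel)"
proof -
  have int: "integrable lborel (\<lambda>u. indicator {0..<c} u * gg c (v - u))"
    by (rule Bochner_Integration.integrable_bound[OF integrable_real_indicator[of "{0..<c}" lborel]])
       (use c_pos in \<open>auto simp: indicator_def gg_nonneg gg_le1\<close>)
  have "(\<integral>u. indicator {0..<c} u * gg c (v - u) \<partial>lborel) = enn2real (\<integral>\<^sup>+u. ennreal (indicator {0..<c} u * gg c (v - u)) \<partial>lborel)"
    by (rule integral_eq_nn_integral) (auto simp: gg_nonneg)
  also have "(\<integral>\<^sup>+u. ennreal (indicator {0..<c} u * gg c (v - u)) \<partial>lborel) = ennreal (kk c v)"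
    unfolding kk_lborel[OF c_pos] by (intro nn_integral_cong) (auto simp: indicator_def)
  finally show ?thesis by (simp add: kk_nonneg)
qed

lemma HH_meas[measurable]: "HH c \<in> borel_measurable borel"
proof -
  have "HH c = (\<lambda>x. \<integral>y. gg c (x - y) \<partial>\<mu>)"
    using HH_integral c_pos by (intro ext) simp
  moreover have "(\<lambda>x. \<integral>y. gg c (x - y) \<partial>\<mu>) \<in> borel_measurable borel" by measurable
  ultimately show ?thesis by simp
qed

lemma HH_le1: "HH c x \<le> 1"
proof -
  have "HH c x \<le> (\<integral>y. 1 \<partial>\<mu>)" unfolding HH_integral[OF less_imp_le[OF c_pos]]
    by (rule integral_mono) (auto intro!: integrable_const_bound[where B=1] simp: gg_nonneg gg_le1)
  then show ?thesis by simp
qed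

lemma KK_real: "KK c x = (\<integral>u. indicator {0..<c} u * HH c (x - u) \<partial>lborel)"
proof -
  have int: "integrable lborel (\<lambda>u. indicator {0..<c} u * HH c (x - u))"
    by (rule Bochner_Integration.integrable_bound[OF integrable_real_indicator[of "{0..<c}" lborel]])
       (use c_pos in \<open>auto simp: indicator_def HH_nonneg HH_le1\<close>)
  have "(\<integral>u. indicator {0..<c} u * HH c (x - u) \<partial>lborel) = enn2real (\<integral>\<^sup>+u. ennreal (indicator {0..<c} u * HH c (x - u)) \<partial>lborel)"
    by (rule integral_eq_nn_integral) (auto simp: HH_nonneg)
  also have "(\<integral>\<^sup>+u. ennreal (indicator {0..<c} u * HH c (x - u)) \<partial>lborel) = ennreal (KK c x)"
    unfolding KK_lborel[OF c_pos] by (intro nn_integral_cong) (auto simp: indicator_def)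
  finally show ?thesis by (simp add: KK_nonneg)
qed


lemma kk_lim: "((\<lambda>v. kk c v / gg c v) \<longlongrightarrow> c) at_top"
proof -
  obtain B where B: "\<forall>\<^sub>F x in at_top. \<forall>y\<in>{0..c}. gg c (x - y) \<le> B * gg c x"
    using g_bound[of c] c_pos by auto
  have eq: "kk c v / gg c v = (\<integral>u. indicator {0..<c} u * (gg c (v - u) / gg c v) \<partial>lborel)" for v
    unfolding kk_real by (subst integral_divide_zero[symmetric]) simp
  have fin: "emeasure lborel {0..<c} < \<top>" using c_pos by simp
  have "((\<lambda>v. \<integral>u. indicator {0..<c} u * (gg c (v - u) / gg c v) \<partial>lborel) \<longlongrightarrow> (\<integral>u. indicator {0..<c} u \<partial>lborel)) at_top"
  proof (rule integral_dominated_convergence_at_top[where w="\<lambda>u. \<bar>B\<bar> * indicator {0..<c} u"])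
    show "indicat_real {0..<c} \<in> borel_measurable lborel" by measurable
    show "(\<lambda>u. indicator {0..<c} u * (gg c (t - u) / gg c t)) \<in> borel_measurable lborel" for t by measurable
    show "integrable lborel (\<lambda>u. \<bar>B\<bar> * indicat_real {0..<c} u)"
      using fin by (intro integrable_mult_right integrable_real_indicator) auto
    show "AE u in lborel. ((\<lambda>v. indicator {0..<c} u * (gg c (v - u) / gg c v)) \<longlongrightarrow> indicator {0..<c} u) at_top"
    proof (intro AE_I2)
      fix u
      have "((\<lambda>v. gg c (v + - u) / gg c v) \<longlongrightarrow> 1) at_top" by (rule g_shift)
      then have "((\<lambda>v. indicator {0..<c} u * (gg c (v - u) / gg c v)) \<longlongrightarrow> indicator {0..<c} u * 1) at_top"
        by (intro tendsto_mult_left) simp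
      then show "((\<lambda>v. indicator {0..<c} u * (gg c (v - u) / gg c v)) \<longlongrightarrow> indicator {0..<c} u) at_top"
        by simp
    qed
    show "\<forall>\<^sub>F v in at_top. AE u in lborel. norm (indicator {0..<c} u * (gg c (v - u) / gg c v)) \<le> \<bar>B\<bar> * indicator {0..<c} u"
      using B g_pos
    proof eventually_elim
      case (elim v)
      show ?case
      proof (intro AE_I2)
        fix u
        show "norm (indicator {0..<c} u * (gg c (v - u) / gg c v)) \<le> \<bar>B\<bar> * indicator {0..<c} u"
        proof (cases "u \<in> {0..<c}")
          case True
          then have "gg c (v - u) \<le> B * gg c v" using elim by auto
          then have "gg c (v - u) / gg c v \<le> B" using elim by (simp add: divide_le_eq)
          then show ?thesis using True by (simp add: gg_nonneg)
        qed simp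
      qed
    qed
  qed
  also have "(\<integral>u. indicator {0..<c} u \<partial>lborel) = c" using c_pos by simp
  finally show ?thesis unfolding eq .
qed

lemma kk_le:
  assumes "\<forall>u\<in>{0..c}. gg c (v - u) \<le> M"
  shows "kk c v \<le> c * M"
proof -
  have "kk c v \<le> (\<integral>u. indicator {0..<c} u * M \<partial>lborel)" unfolding kk_real
  proof (rule integral_mono)
    show "integrable lborel (\<lambda>u. indicator {0..<c} u * M)"
      using c_pos by (intro integrable_mult_left integrable_real_indicator) auto
    show "integrable lborel (\<lambda>u. indicator {0..<c} u * gg c (v - u))"
      by (rule Bochner_Integration.integrable_bound[OF integrable_real_indicator[of "{0..<c}" lborel]])
         (use c_pos in \<open>auto simp: indicator_def gg_nonneg gg_le1\<close>)
    show "indicator {0..<c} u * gg c (v - u) \<le> indicator {0..<c} u * M" for u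
      using assms by (auto simp: indicator_def)
  qed
  also have "\<dots> = c * M" using c_pos by simp
  finally show ?thesis .
qed

lemma AK_lim:
  assumes a: "0 \<le> a"
  shows "((\<lambda>x. AK c a x / gg c x) \<longlongrightarrow> c * measure \<mu> {..a}) at_top"
proof -
  obtain B where B: "\<forall>\<^sub>F x in at_top. \<forall>y\<in>{0..a + c}. gg c (x - y) \<le> B * gg c x"
    using g_bound[of "a + c"] a c_pos by auto
  have eq: "AK c a x / gg c x = (\<integral>y. indicator {..a} y * (kk c (x - y) / gg c x) \<partial>\<mu>)" for x
    unfolding AK_def by (subst integral_divide_zero[symmetric]) simp
  have "((\<lambda>x. \<integral>y. indicator {..a} y * (kk c (x - y) / gg c x) \<partial>\<mu>) \<longlongrightarrow> c * measure \<mu> {..a}) at_top"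
  proof (rule loc_lim[OF a, where B="c * B"])
    show "(\<lambda>y. kk c (x - y) / gg c x) \<in> borel_measurable borel" for x by measurable
    show "((\<lambda>x. kk c (x - y) / gg c x) \<longlongrightarrow> c) at_top" for y
    proof -
      have "((\<lambda>x. kk c (x + - y) / gg c (x + - y)) \<longlongrightarrow> c) at_top"
        by (rule tendsto_shift[OF kk_lim])
      then have t1: "((\<lambda>x. kk c (x + - y) / gg c (x + - y) * (gg c (x + - y) / gg c x)) \<longlongrightarrow> c * 1) at_top"
        by (intro tendsto_mult g_shift)
      have ev: "\<forall>\<^sub>F x in at_top. kk c (x + - y) / gg c (x + - y) * (gg c (x + - y) / gg c x) = kk c (x - y) / gg c x"
        using eventually_shift[OF g_pos, of "-y"] by eventually_elim simp
      show ?thesis using Lim_transform_eventually[OF t1 ev] by simp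
    qed
    show "\<forall>\<^sub>F x in at_top. \<forall>y\<in>{0..a}. \<bar>kk c (x - y) / gg c x\<bar> \<le> c * B"
      using B g_pos
    proof eventually_elim
      case (elim x)
      show ?case
      proof
        fix y assume y: "y \<in> {0..a}"
        have "kk c (x - y) \<le> c * (B * gg c x)"
          by (rule kk_le) (use elim y in \<open>auto simp: algebra_simps\<close>)
        then show "\<bar>kk c (x - y) / gg c x\<bar> \<le> c * B"
          using elim by (simp add: divide_le_eq kk_nonneg algebra_simps)
      qed
    qed
  qed
  then show ?thesis unfolding eq .
qed


lemma core:
  assumes hyp: "\<And>\<eta>. \<eta> > 0 \<Longrightarrow> \<exists>a\<ge>0. \<forall>\<^sub>F x in at_top. MK c a x \<le> \<eta> * gg c x"
  shows "((\<lambda>x. HH c x / gg c x) \<longlongrightarrow> 2) at_top"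
proof (rule order_tendstoI)
  fix l :: real assume l: "l < 2"
  define e where "e = 2 - l"
  have e: "0 < e" using l by (simp add: e_def)
  have "\<forall>\<^sub>F a in at_top. 1 - e / 4 < measure \<mu> {..a}"
    using cdf_lim by (rule order_tendstoD) (use e in simp)
  then obtain a0 where a0: "\<And>a. a \<ge> a0 \<Longrightarrow> 1 - e / 4 < measure \<mu> {..a}"
    by (auto simp: eventually_at_top_linorder)
  define a where "a = max a0 0"
  have a: "0 \<le> a" "1 - e / 4 < measure \<mu> {..a}" using a0[of a] by (auto simp: a_def)
  have "\<forall>\<^sub>F x in at_top. measure \<mu> {..a} - e / 4 < AA c a x / gg c x"
    using AA_lim[OF a(1)] by (rule order_tendstoD) (use e in simp)
  moreover have "\<forall>\<^sub>F x in at_top. 2 * a \<le> x - c" by real_asymp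
  ultimately show "\<forall>\<^sub>F x in at_top. l < HH c x / gg c x"
    using g_pos
  proof eventually_elim
    case (elim x)
    have "HH c x = 2 * AA c a x + MM c a x" by (rule HH_decomp) (use c_pos a elim in auto)
    then have "2 * AA c a x \<le> HH c x" using MM_nonneg by simp
    then have "2 * (AA c a x / gg c x) \<le> HH c x / gg c x" using elim by (simp add: divide_right_mono)
    then show ?case using elim a e_def by linarith
  qed
next
  fix u :: real assume u: "2 < u"
  define e where "e = u - 2"
  have e: "0 < e" using u by (simp add: e_def)
  obtain a where a: "0 \<le> a" and ev: "\<forall>\<^sub>F x in at_top. MK c a x \<le> (e * c / 8) * gg c x"
    using hyp[of "e * c / 8"] e c_pos by auto
  have "\<forall>\<^sub>F x in at_top. AA c a x / gg c x < measure \<mu> {..a} + e / 4"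
    using AA_lim[OF a] by (rule order_tendstoD) (use e in simp)
  moreover have "\<forall>\<^sub>F x in at_top. 2 * a \<le> x - c" by real_asymp
  moreover note eventually_shift[OF ev, of c]
  moreover note g_shift_le[of c]
  moreover note ev
  ultimately show "\<forall>\<^sub>F x in at_top. HH c x / gg c x < u"
    using g_pos
  proof eventually_elim
    case (elim x)
    have H: "HH c x = 2 * AA c a x + MM c a x" by (rule HH_decomp) (use c_pos a elim in auto)
    have "c * MM c a x \<le> MK c a x + MK c a (x + c)" by (rule MM_MK[OF c_pos])
    also have "\<dots> \<le> (e * c / 8) * gg c x + (e * c / 8) * (2 * gg c x)"
    proof (rule add_mono)
      show "MK c a x \<le> e * c / 8 * gg c x" using elim by simp
      have "(e * c / 8) * gg c (x + c) \<le> (e * c / 8) * (2 * gg c x)"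
        by (rule mult_left_mono) (use elim e c_pos in auto)
      then show "MK c a (x + c) \<le> e * c / 8 * (2 * gg c x)" using elim by linarith
    qed
    finally have "c * MM c a x \<le> c * (3 * e / 8 * gg c x)" by (simp add: algebra_simps)
    then have M: "MM c a x \<le> 3 * e / 8 * gg c x" using c_pos by simp
    have "AA c a x < (measure \<mu> {..a} + e / 4) * gg c x" using elim by (simp add: divide_less_eq)
    also have "\<dots> \<le> (1 + e / 4) * gg c x" using elim by (intro mult_right_mono) auto
    finally have A: "AA c a x < (1 + e / 4) * gg c x" .
    have eg: "0 \<le> e * gg c x" using e elim by simp
    have M': "MM c a x \<le> 3 / 8 * (e * gg c x)" using M by simp
    have A': "AA c a x < gg c x + 1 / 4 * (e * gg c x)" using A by (simp add: algebra_simps)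
    have "HH c x < 2 * gg c x + e * gg c x" using H M' A' eg by linarith
    also have "\<dots> = u * gg c x" unfolding e_def by (simp add: algebra_simps)
    finally have "HH c x < u * gg c x" .
    then show ?case using elim by (simp add: divide_less_eq)
  qed
qed


end


context distL begin

lemma HH_integrable: "integrable lborel (\<lambda>u. indicator {0..<c} u * HH c (x - u))"
  by (rule Bochner_Integration.integrable_bound[OF integrable_real_indicator[of "{0..<c}" lborel]])
     (use c_pos in \<open>auto simp: indicator_def HH_nonneg HH_le1\<close>)

lemma gg_int0: "integrable lborel (\<lambda>u. indicator {0..<c} u * gg c (x - u))"
  by (rule Bochner_Integration.integrable_bound[OF integrable_real_indicator[of "{0..<c}" lborel]])
     (use c_pos in \<open>auto simp: indicator_def gg_nonneg gg_le1\<close>)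

lemma gg_integrable: "integrable lborel (\<lambda>u. indicator {0..<c} u * (r * gg c (x - u)))"
proof -
  have "(\<lambda>u. indicator {0..<c} u * (r * gg c (x - u))) = (\<lambda>u. r * (indicator {0..<c} u * gg c (x - u)))"
    by (rule ext) (simp add: mult.left_commute)
  then show ?thesis using integrable_mult_right[OF gg_int0] by simp
qed

lemma kk_scale: "(\<integral>u. indicator {0..<c} u * (r * gg c (x - u)) \<partial>lborel) = r * kk c x"
proof -
  have "(\<lambda>u. indicator {0..<c} u * (r * gg c (x - u))) = (\<lambda>u. r * (indicator {0..<c} u * gg c (x - u)))"
    by (rule ext) (simp add: mult.left_commute)
  then show ?thesis unfolding kk_real by simp
qed

lemma forward:
  assumes H: "((\<lambda>x. HH c x / gg c x) \<longlongrightarrow> 2) at_top"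
  shows "((\<lambda>x. KK c x / gg c x) \<longlongrightarrow> 2 * c) at_top"
proof -
  have kb: "\<forall>\<^sub>F x in at_top. kk c x / gg c x < c + 1"
    using kk_lim by (rule order_tendstoD) simp
  have R: "((\<lambda>x. (KK c x - 2 * kk c x) / gg c x) \<longlongrightarrow> 0) at_top"
  proof (rule tendstoI)
    fix e :: real assume e: "0 < e"
    define d where "d = e / (2 * (c + 1))"
    have d: "0 < d" using e c_pos by (simp add: d_def)
    have "\<forall>\<^sub>F z in at_top. dist (HH c z / gg c z) 2 < d"
      using H d by (rule tendstoD)
    then have "\<forall>\<^sub>F z in at_top. dist (HH c z / gg c z) 2 < d \<and> 0 < gg c z"
      using g_pos by (rule eventually_conj)
    then obtain N where N: "\<And>z. z \<ge> N \<Longrightarrow> dist (HH c z / gg c z) 2 < d \<and> 0 < gg c z"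
      unfolding eventually_at_top_linorder by blast
    have N': "\<And>z. z \<ge> N \<Longrightarrow> (2 - d) * gg c z \<le> HH c z \<and> HH c z \<le> (2 + d) * gg c z"
    proof -
      fix z assume z: "z \<ge> N"
      from N[OF z] have g: "0 < gg c z" and dd: "\<bar>HH c z / gg c z - 2\<bar> < d" by (auto simp: dist_real_def)
      then have "2 - d < HH c z / gg c z" "HH c z / gg c z < 2 + d" by auto
      then show "(2 - d) * gg c z \<le> HH c z \<and> HH c z \<le> (2 + d) * gg c z"
        using g by (auto simp: less_divide_eq divide_less_eq)
    qed
    have "\<forall>\<^sub>F x in at_top. x \<ge> N + c" by (rule eventually_ge_at_top)
    then show "\<forall>\<^sub>F x in at_top. dist ((KK c x - 2 * kk c x) / gg c x) 0 < e"
      using kb g_pos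
    proof eventually_elim
      case (elim x)
      have pt: "\<And>u. u \<in> {0..<c} \<Longrightarrow> (2 - d) * gg c (x - u) \<le> HH c (x - u) \<and> HH c (x - u) \<le> (2 + d) * gg c (x - u)"
        by (rule N') (use elim in auto)
      have up: "KK c x \<le> (2 + d) * kk c x"
      proof -
        have "KK c x \<le> (\<integral>u. indicator {0..<c} u * ((2 + d) * gg c (x - u)) \<partial>lborel)"
          unfolding KK_real by (rule integral_mono[OF HH_integrable gg_integrable]) (use pt in \<open>auto simp: indicator_def\<close>)
        also have "\<dots> = (2 + d) * kk c x" by (rule kk_scale)
        finally show ?thesis .
      qed
      have lo: "(2 - d) * kk c x \<le> KK c x"
      proof -
        have "(\<integral>u. indicator {0..<c} u * ((2 - d) * gg c (x - u)) \<partial>lborel) \<le> KK c x"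
          unfolding KK_real by (rule integral_mono[OF gg_integrable HH_integrable]) (use pt in \<open>auto simp: indicator_def\<close>)
        moreover have "(\<integral>u. indicator {0..<c} u * ((2 - d) * gg c (x - u)) \<partial>lborel) = (2 - d) * kk c x"
          by (rule kk_scale)
        ultimately show ?thesis by simp
      qed
      have "\<bar>KK c x - 2 * kk c x\<bar> \<le> d * kk c x" using up lo by (simp add: algebra_simps abs_le_iff)
      also have "\<dots> < d * ((c + 1) * gg c x)"
        using elim d by (intro mult_strict_left_mono) (auto simp: divide_less_eq)
      also have "\<dots> = e / 2 * gg c x" unfolding d_def using c_pos by (simp add: field_simps)
      finally have "\<bar>KK c x - 2 * kk c x\<bar> < e / 2 * gg c x" .
      moreover have "\<bar>(KK c x - 2 * kk c x) / gg c x\<bar> = \<bar>KK c x - 2 * kk c x\<bar> / gg c x"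
        using elim by (simp add: abs_divide)
      ultimately have "\<bar>(KK c x - 2 * kk c x) / gg c x\<bar> < e / 2"
        using elim by (simp add: pos_divide_less_eq)
      then show ?case using e unfolding dist_real_def diff_0_right by linarith
    qed
  qed
  have "((\<lambda>x. (KK c x - 2 * kk c x) / gg c x + 2 * (kk c x / gg c x)) \<longlongrightarrow> 0 + 2 * c) at_top"
    by (intro tendsto_add R tendsto_mult tendsto_const kk_lim)
  then have t: "((\<lambda>x. (KK c x - 2 * kk c x) / gg c x + 2 * (kk c x / gg c x)) \<longlongrightarrow> 2 * c) at_top"
    by simp
  have "\<forall>\<^sub>F x in at_top. (KK c x - 2 * kk c x) / gg c x + 2 * (kk c x / gg c x) = KK c x / gg c x"
    by (rule always_eventually) (simp add: diff_divide_distrib)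
  from Lim_transform_eventually[OF t this] show ?thesis .
qed

lemma backward:
  assumes K: "((\<lambda>x. KK c x / gg c x) \<longlongrightarrow> 2 * c) at_top"
  shows "((\<lambda>x. HH c x / gg c x) \<longlongrightarrow> 2) at_top"
proof (rule core)
  fix \<eta> :: real assume \<eta>: "0 < \<eta>"
  have "\<forall>\<^sub>F a in at_top. 1 - \<eta> / (4 * c) < measure \<mu> {..a}"
    using cdf_lim by (rule order_tendstoD) (use \<eta> c_pos in simp)
  then obtain a0 where a0: "\<And>a. a \<ge> a0 \<Longrightarrow> 1 - \<eta> / (4 * c) < measure \<mu> {..a}"
    by (auto simp: eventually_at_top_linorder)
  define a where "a = max a0 0"
  have a: "0 \<le> a" "1 - \<eta> / (4 * c) < measure \<mu> {..a}" using a0[of a] by (auto simp: a_def)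
  have lim: "((\<lambda>x. KK c x / gg c x - 2 * (AK c a x / gg c x)) \<longlongrightarrow> 2 * c - 2 * (c * measure \<mu> {..a})) at_top"
    by (intro tendsto_diff K tendsto_mult tendsto_const AK_lim a)
  have lt: "2 * c - 2 * (c * measure \<mu> {..a}) < \<eta>"
  proof -
    have "c * (1 - \<eta> / (4 * c)) < c * measure \<mu> {..a}" using a c_pos by simp
    then have "c - \<eta> / 4 < c * measure \<mu> {..a}" using c_pos by (simp add: algebra_simps)
    then show ?thesis using \<eta> by linarith
  qed
  have "\<forall>\<^sub>F x in at_top. KK c x / gg c x - 2 * (AK c a x / gg c x) < \<eta>"
    using lim lt by (rule order_tendstoD)
  moreover have "\<forall>\<^sub>F x in at_top. 2 * a \<le> x - 2 * c" by real_asymp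
  ultimately have "\<forall>\<^sub>F x in at_top. MK c a x \<le> \<eta> * gg c x"
    using g_pos
  proof eventually_elim
    case (elim x)
    have "KK c x = 2 * AK c a x + MK c a x" by (rule KK_decomp) (use c_pos a elim in auto)
    then have "MK c a x = KK c x - 2 * AK c a x" by simp
    then have "MK c a x / gg c x = KK c x / gg c x - 2 * (AK c a x / gg c x)"
      by (simp add: diff_divide_distrib)
    then have "MK c a x / gg c x < \<eta>" using elim by simp
    then show ?case using elim by (simp add: divide_less_eq)
  qed
  then show "\<exists>a\<ge>0. \<forall>\<^sub>F x in at_top. MK c a x \<le> \<eta> * gg c x" using a by blast
qed

end



lemma tendsto_div_const_iff:
  fixes f :: "real \<Rightarrow> real"
  assumes r: "r \<noteq> 0"
  shows "((\<lambda>x. f x / r) \<longlongrightarrow> l) F \<longleftrightarrow> (f \<longlongrightarrow> l * r) F"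
proof
  assume "((\<lambda>x. f x / r) \<longlongrightarrow> l) F"
  from tendsto_mult_right[OF this, of r] show "(f \<longlongrightarrow> l * r) F" using r by simp
next
  assume "(f \<longlongrightarrow> l * r) F"
  from tendsto_divide[OF this tendsto_const[of r]] show "((\<lambda>x. f x / r) \<longlongrightarrow> l) F" using r by simp
qed

lemma asymp_shift:
  "asymp_equiv_top f g \<Longrightarrow> asymp_equiv_top (\<lambda>x. f (x + b)) (\<lambda>x. g (x + b))"
  unfolding asymp_equiv_top_def by (rule tendsto_shift[where f="\<lambda>x. f x / g x"])

lemma asymp_shift_iff:
  "asymp_equiv_top (\<lambda>x. f (x + b)) (\<lambda>x. g (x + b)) \<longleftrightarrow> asymp_equiv_top f g"
  using asymp_shift[of "\<lambda>x. f (x + b)" "\<lambda>x. g (x + b)" "-b"] asymp_shift[of f g b] by auto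

lemma class_L_shift:
  assumes "class_L f"
  shows "class_L (\<lambda>x. f (x + b))"
proof -
  have m: "f \<in> borel_measurable borel" and nn: "\<And>x. 0 \<le> f x" and ev: "\<forall>\<^sub>F x in at_top. f x > 0"
    and a: "\<And>a. asymp_equiv_top (\<lambda>x. f (x + a)) f"
    using assms unfolding class_L_def by auto
  have "(\<lambda>x. f (x + b)) \<in> borel_measurable borel"
    using measurable_compose[OF _ m, of "\<lambda>x. x + b" borel] by simp
  moreover have "\<forall>\<^sub>F x in at_top. f (x + b) > 0" by (rule eventually_shift[OF ev])
  moreover have "asymp_equiv_top (\<lambda>x. f (x + a + b)) (\<lambda>x. f (x + b))" for a
  proof -
    have "asymp_equiv_top (\<lambda>x. f (x + b + a)) (\<lambda>x. f (x + b))"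
      using asymp_shift[OF a[of a], of b] by simp
    moreover have "(\<lambda>x. f (x + a + b)) = (\<lambda>x. f (x + b + a))" by (simp add: algebra_simps)
    ultimately show ?thesis by simp
  qed
  ultimately show ?thesis unfolding class_L_def using nn by auto
qed

lemma class_L_shift_iff: "class_L (\<lambda>x. f (x + b)) \<longleftrightarrow> class_L f"
  using class_L_shift[of "\<lambda>x. f (x + b)" "-b"] class_L_shift[of f b] by auto

lemma class_L_mult:
  assumes "class_L f" "0 < r"
  shows "class_L (\<lambda>x. r * f x)"
proof -
  have m: "f \<in> borel_measurable borel" and nn: "\<And>x. 0 \<le> f x" and ev: "\<forall>\<^sub>F x in at_top. f x > 0"
    and a: "\<And>a. asymp_equiv_top (\<lambda>x. f (x + a)) f"
    using assms unfolding class_L_def by auto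
  have "(\<lambda>x. r * f (x + a) / (r * f x)) = (\<lambda>x. f (x + a) / f x)" for a
    using assms(2) by (intro ext) simp
  moreover have "\<forall>\<^sub>F x in at_top. r * f x > 0" using ev by eventually_elim (use assms(2) in simp)
  ultimately show ?thesis using m nn a assms(2) unfolding class_L_def asymp_equiv_top_def
    by auto
qed

lemma class_L_div_iff:
  assumes "0 < r"
  shows "class_L (\<lambda>x. f x / r) \<longleftrightarrow> class_L f"
proof
  assume "class_L (\<lambda>x. f x / r)"
  from class_L_mult[OF this assms] show "class_L f" using assms by simp
next
  assume "class_L f"
  from class_L_mult[OF this, of "1 / r"] show "class_L (\<lambda>x. f x / r)" using assms by simp
qed

context dist0 begin

lemma fconv_KK:
  assumes c: "0 < c"
  shows "fconv (\<lambda>x. gg c x / c) (\<lambda>x. gg c x / c) x = KK c x / c\<^sup>2"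
proof -
  have [measurable]: "gg c \<in> borel_measurable borel" using c by (intro gg_measurable) simp
  have nn: "(\<integral>\<^sup>+u. ennreal (gg c (x - u) * gg c u) \<partial>lborel) = ennreal (KK c x)"
  proof -
    have "(\<integral>\<^sup>+u. ennreal (gg c (x - u) * gg c u) \<partial>lborel) =
      (\<integral>\<^sup>+u. (\<integral>\<^sup>+y. 1 * indicator {u - c<..u} y \<partial>\<mu>) * (\<integral>\<^sup>+z. 1 * indicator {x - u - c<..x - u} z \<partial>\<mu>) \<partial>lborel)"
      by (intro nn_integral_cong) (simp add: gg_nn[symmetric] ennreal_mult gg_nonneg mult.commute)
    also have "\<dots> = (\<integral>\<^sup>+y. \<integral>\<^sup>+z. 1 * 1 * ennreal (TT c (x - y - z)) \<partial>\<mu> \<partial>\<mu>)"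
      by (rule conv_tonelli[OF c]) auto
    also have "\<dots> = ennreal (KK c x)" using c by (simp add: E_KK)
    finally show ?thesis .
  qed
  have int: "integrable lborel (\<lambda>u. gg c (x - u) * gg c u)"
    by (rule integrableI_nonneg) (auto simp: nn gg_nonneg)
  have "(\<integral>u. gg c (x - u) * gg c u \<partial>lborel) = KK c x"
  proof -
    have "ennreal (\<integral>u. gg c (x - u) * gg c u \<partial>lborel) = ennreal (KK c x)"
      using nn_integral_eq_integral[OF int] nn by (simp add: gg_nonneg)
    then show ?thesis by (subst (asm) ennreal_inj) (auto simp: KK_nonneg gg_nonneg intro!: integral_nonneg)
  qed
  moreover have "fconv (\<lambda>x. gg c x / c) (\<lambda>x. gg c x / c) x = (\<integral>u. gg c (x - u) * gg c u \<partial>lborel) / c\<^sup>2"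
    unfolding fconv_def by (subst integral_divide_zero[symmetric]) (simp add: power2_eq_square)
  ultimately show ?thesis by simp
qed

lemma density_p:
  assumes c: "0 < c"
  shows "density_fun (\<lambda>x. gg c x / c)"
proof -
  have [measurable]: "gg c \<in> borel_measurable borel" using c by (intro gg_measurable) simp
  interpret Q: pair_sigma_finite \<mu> lborel ..
  have "(\<integral>\<^sup>+x. ennreal (gg c x) \<partial>lborel) = (\<integral>\<^sup>+x. \<integral>\<^sup>+y. indicator {x - c<..x} y \<partial>\<mu> \<partial>lborel)"
    by (simp add: gg_nn)
  also have "\<dots> = (\<integral>\<^sup>+y. \<integral>\<^sup>+x. indicator {y..<y + c} x \<partial>lborel \<partial>\<mu>)"
  proof -
    have "(\<integral>\<^sup>+x. \<integral>\<^sup>+y. indicator {x - c<..x} y \<partial>\<mu> \<partial>lborel) = (\<integral>\<^sup>+x. \<integral>\<^sup>+y. indicator {y..<y + c} x \<partial>\<mu> \<partial>lborel)"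
      by (intro nn_integral_cong) (auto split: split_indicator)
    also have "\<dots> = (\<integral>\<^sup>+y. \<integral>\<^sup>+x. indicator {y..<y + c} x \<partial>lborel \<partial>\<mu>)"
      by (rule Q.Fubini') measurable
    finally show ?thesis .
  qed
  also have "\<dots> = (\<integral>\<^sup>+y. ennreal c \<partial>\<mu>)" using c by simp
  also have "\<dots> = ennreal c" using emeasure_space_1 by simp
  finally have I: "(\<integral>\<^sup>+x. ennreal (gg c x) \<partial>lborel) = ennreal c" .
  have "(\<integral>\<^sup>+x. ennreal (gg c x / c) \<partial>lborel) = (\<integral>\<^sup>+x. ennreal (1 / c) * ennreal (gg c x) \<partial>lborel)"
    using c by (intro nn_integral_cong) (simp add: ennreal_mult[symmetric] gg_nonneg)
  also have "\<dots> = ennreal (1 / c) * ennreal c" by (simp add: nn_integral_cmult I)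
  also have "\<dots> = 1" using c by (simp add: ennreal_mult[symmetric])
  finally show ?thesis unfolding density_fun_def using c by (auto simp: gg_nonneg)
qed

end



context dist0 begin

lemma to_distL:
  assumes "0 < c" "class_L (gg c)"
  shows "distL \<mu> c"
  using assms by unfold_locales (auto simp: sets_mu neg0 emeasure_space_1)

lemma part1:
  assumes c: "0 < c"
  shows "S_Delta c \<mu> \<longleftrightarrow> S_d (\<lambda>x. measure \<mu> {x - c<..x} / c)"
proof -
  have p: "(\<lambda>x. measure \<mu> {x - c<..x} / c) = (\<lambda>x. gg c x / c)" by (simp add: gg_def)
  have LD: "L_Delta c \<mu> \<longleftrightarrow> class_L (gg c)"
  proof -
    have "(\<lambda>x. measure \<mu> {x<..x + c}) = (\<lambda>x. gg c (x + c))" by (simp add: gg_def)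
    then show ?thesis unfolding L_Delta_def using class_L_shift_iff[of "gg c" c] by simp
  qed
  have Lp: "class_L (\<lambda>x. gg c x / c) \<longleftrightarrow> class_L (gg c)" by (rule class_L_div_iff[OF c])
  show ?thesis
  proof (cases "class_L (gg c)")
    case False
    then show ?thesis unfolding S_Delta_def S_d_def L_d_def p using LD Lp by simp
  next
    case True
    interpret distL \<mu> c by (rule to_distL[OF c True])
    have H: "asymp_equiv_top (\<lambda>x. measure (\<mu> \<star> \<mu>) {x<..x + c}) (\<lambda>x. 2 * measure \<mu> {x<..x + c})
       \<longleftrightarrow> ((\<lambda>x. HH c x / gg c x) \<longlongrightarrow> 2) at_top"
    proof -
      have e1: "(\<lambda>x. measure (\<mu> \<star> \<mu>) {x<..x + c}) = (\<lambda>x. HH c (x + c))" by (simp add: HH_def)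
      have e2: "(\<lambda>x. 2 * measure \<mu> {x<..x + c}) = (\<lambda>x. 2 * gg c (x + c))" by (simp add: gg_def)
      have "asymp_equiv_top (\<lambda>x. HH c (x + c)) (\<lambda>x. 2 * gg c (x + c)) \<longleftrightarrow> asymp_equiv_top (HH c) (\<lambda>x. 2 * gg c x)"
        using asymp_shift_iff[of "HH c" c "\<lambda>x. 2 * gg c x"] by simp
      also have "\<dots> \<longleftrightarrow> ((\<lambda>x. (HH c x / gg c x) / 2) \<longlongrightarrow> 1) at_top"
        unfolding asymp_equiv_top_def by (simp add: field_simps)
      also have "\<dots> \<longleftrightarrow> ((\<lambda>x. HH c x / gg c x) \<longlongrightarrow> 2) at_top"
        using tendsto_div_const_iff[of 2 "\<lambda>x. HH c x / gg c x" 1 at_top] by simp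
      finally show ?thesis unfolding e1 e2 .
    qed
    have K: "asymp_equiv_top (fconv (\<lambda>x. gg c x / c) (\<lambda>x. gg c x / c)) (\<lambda>x. 2 * (gg c x / c))
       \<longleftrightarrow> ((\<lambda>x. KK c x / gg c x) \<longlongrightarrow> 2 * c) at_top"
    proof -
      have eq: "fconv (\<lambda>x. gg c x / c) (\<lambda>x. gg c x / c) x / (2 * (gg c x / c)) = (KK c x / gg c x) / (2 * c)" for x
        unfolding fconv_KK[OF c] using c
        by (cases "gg c x = 0") (simp_all add: field_simps power2_eq_square)
      have "asymp_equiv_top (fconv (\<lambda>x. gg c x / c) (\<lambda>x. gg c x / c)) (\<lambda>x. 2 * (gg c x / c))
         \<longleftrightarrow> ((\<lambda>x. (KK c x / gg c x) / (2 * c)) \<longlongrightarrow> 1) at_top"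
        unfolding asymp_equiv_top_def eq ..
      also have "\<dots> \<longleftrightarrow> ((\<lambda>x. KK c x / gg c x) \<longlongrightarrow> 2 * c) at_top"
        using tendsto_div_const_iff[of "2 * c" "\<lambda>x. KK c x / gg c x" 1 at_top] c by simp
      finally show ?thesis .
    qed
    show ?thesis
      unfolding S_Delta_def S_d_def L_d_def p H K
      using LD Lp True density_p[OF c] forward backward by blast
  qed
qed

end



lemma pos_rat_between:
  fixes l u :: real
  assumes "0 \<le> l" "l < u"
  shows "\<exists>m n::nat. 0 < n \<and> 0 < m \<and> l < real m / real n \<and> real m / real n < u"
proof -
  obtain r where r: "r \<in> \<rat>" "l < r" "r < u" using Rats_dense_in_real[OF assms(2)] by blast
  obtain m n :: nat where n: "n \<noteq> 0" and mn: "\<bar>r\<bar> = real m / real n"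
    using Rats_abs_nat_div_natE[OF r(1)] by metis
  have "r > 0" using r assms by linarith
  then have "real m / real n > 0" using mn by simp
  then have "m > 0" by (cases "m = 0") auto
  then show ?thesis using n mn r \<open>r > 0\<close> by (intro exI[of _ m] exI[of _ n]) auto
qed

context dist0 begin

lemma gg_mono: "c1 \<le> c2 \<Longrightarrow> gg c1 x \<le> gg c2 x"
  unfolding gg_def by (intro finite_measure_mono) (auto simp: sets_mu)

lemma gg_sum:
  assumes h: "0 < h"
  shows "gg (real m * h) x = (\<Sum>k<m. gg h (x - real k * h))"
proof (induction m)
  case 0 then show ?case by (simp add: gg_def)
next
  case (Suc m)
  have "{x - real (Suc m) * h<..x} = {x - real m * h<..x} \<union> {x - real m * h - h<..x - real m * h}"
  proof -
    have hm: "0 \<le> h * real m" using h by simp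
    show ?thesis using h by (auto simp: algebra_simps) (use hm in linarith)
  qed
  then have "gg (real (Suc m) * h) x = measure \<mu> ({x - real m * h<..x} \<union> {x - real m * h - h<..x - real m * h})"
    by (simp add: gg_def)
  also have "\<dots> = gg (real m * h) x + gg h (x - real m * h)"
    unfolding gg_def by (rule finite_measure_Union) (auto simp: sets_mu)
  finally show ?case using Suc by simp
qed

lemma rat_ratio:
  assumes L: "\<And>r. 0 < r \<Longrightarrow> class_L (gg r)" and m: "0 < m" and n: "0 < n"
  shows "((\<lambda>x. gg (real m / real n) x / gg 1 x) \<longlongrightarrow> real m / real n) at_top"
proof -
  define h where "h = 1 / real n"
  have h: "0 < h" using n by (simp add: h_def)
  interpret distL \<mu> h by (rule to_distL[OF h L[OF h]])
  have lim: "((\<lambda>x. gg (real j * h) x / gg h x) \<longlongrightarrow> real j) at_top" for j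
  proof -
    have "((\<lambda>x. \<Sum>k<j. gg h (x + - (real k * h)) / gg h x) \<longlongrightarrow> (\<Sum>k<j. 1)) at_top"
      by (intro tendsto_sum g_shift)
    then show ?thesis by (simp add: gg_sum[OF h] sum_divide_distrib)
  qed
  have "((\<lambda>x. (gg (real m * h) x / gg h x) / (gg (real n * h) x / gg h x)) \<longlongrightarrow> real m / real n) at_top"
    by (intro tendsto_divide lim) (use n in auto)
  moreover have "\<forall>\<^sub>F x in at_top. (gg (real m * h) x / gg h x) / (gg (real n * h) x / gg h x) = gg (real m / real n) x / gg 1 x"
    using g_pos by eventually_elim (use n in \<open>simp add: h_def\<close>)
  ultimately show ?thesis by (rule Lim_transform_eventually)
qed

lemma L_loc_ratio:
  assumes L: "\<And>r. 0 < r \<Longrightarrow> class_L (gg r)" and c: "0 < c'"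
  shows "((\<lambda>x. gg c' x / gg 1 x) \<longlongrightarrow> c') at_top"
proof -
  have g1: "\<forall>\<^sub>F x in at_top. 0 < gg 1 x" using L[of 1] unfolding class_L_def by auto
  show ?thesis
  proof (rule order_tendstoI)
    fix l assume l: "l < c'"
    obtain m n :: nat where mn: "0 < n" "0 < m" "max l 0 < real m / real n" "real m / real n < c'"
      using pos_rat_between[of "max l 0" c'] l c by auto
    have "\<forall>\<^sub>F x in at_top. l < gg (real m / real n) x / gg 1 x"
      using rat_ratio[OF L mn(2,1)] by (rule order_tendstoD) (use mn in auto)
    then show "\<forall>\<^sub>F x in at_top. l < gg c' x / gg 1 x"
      using g1
    proof eventually_elim
      case (elim x)
      have "gg (real m / real n) x \<le> gg c' x" by (rule gg_mono) (use mn in auto)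
      then have "gg (real m / real n) x / gg 1 x \<le> gg c' x / gg 1 x"
        using elim by (simp add: divide_right_mono)
      then show ?case using elim by linarith
    qed
  next
    fix u assume u: "c' < u"
    obtain m n :: nat where mn: "0 < n" "0 < m" "c' < real m / real n" "real m / real n < u"
      using pos_rat_between[of c' u] u c by auto
    have "\<forall>\<^sub>F x in at_top. gg (real m / real n) x / gg 1 x < u"
      using rat_ratio[OF L mn(2,1)] by (rule order_tendstoD) (use mn in auto)
    then show "\<forall>\<^sub>F x in at_top. gg c' x / gg 1 x < u"
      using g1
    proof eventually_elim
      case (elim x)
      have "gg c' x \<le> gg (real m / real n) x" by (rule gg_mono) (use mn in auto)
      then have "gg c' x / gg 1 x \<le> gg (real m / real n) x / gg 1 x"
        using elim by (simp add: divide_right_mono)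
      then show ?case using elim by linarith
    qed
  qed
qed

end



locale qd =
  fixes q :: "real \<Rightarrow> real"
  assumes dens: "density_fun q" and Sq: "S_d q"
begin

lemma q_meas[measurable]: "q \<in> borel_measurable borel"
  using dens unfolding density_fun_def by auto
lemma q_nn: "0 \<le> q x"
  using dens unfolding density_fun_def by auto
lemma q_nn1: "(\<integral>\<^sup>+x. ennreal (q x) \<partial>lborel) = 1"
  using dens unfolding density_fun_def by auto
lemma q_int: "integrable lborel q"
  by (rule integrableI_nonneg) (auto simp: q_nn q_nn1)
lemma q_integral: "(\<integral>x. q x \<partial>lborel) = 1"
  using integral_eq_nn_integral[of q lborel] q_nn q_nn1 by simp
lemma q_L: "class_L q"
  using Sq unfolding S_d_def L_d_def by auto
lemma q_pos: "\<forall>\<^sub>F x in at_top. 0 < q x"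
  using q_L unfolding class_L_def by auto
lemma q_shift: "((\<lambda>x. q (x + b) / q x) \<longlongrightarrow> 1) at_top"
  using q_L unfolding class_L_def asymp_equiv_top_def by auto
lemma q_conv: "((\<lambda>x. fconv q q x / (2 * q x)) \<longlongrightarrow> 1) at_top"
  using Sq unfolding S_d_def asymp_equiv_top_def by auto

definition Qf :: "real \<Rightarrow> real" where
  "Qf a = (\<integral>u. indicator {..a} u * q u \<partial>lborel)"

lemma Qf_lim: "(Qf \<longlongrightarrow> 1) at_top"
proof -
  have "(Qf \<longlongrightarrow> (\<integral>u. q u \<partial>lborel)) at_top"
    unfolding Qf_def
  proof (rule integral_dominated_convergence_at_top[where w=q])
    show "q \<in> borel_measurable lborel" by measurable
    show "(\<lambda>u. indicator {..t} u * q u) \<in> borel_measurable lborel" for t by measurable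
    show "integrable lborel q" by (rule q_int)
    show "AE u in lborel. ((\<lambda>a. indicator {..a} u * q u) \<longlongrightarrow> q u) at_top"
    proof (intro AE_I2)
      fix u
      have "\<forall>\<^sub>F a in at_top. q u = indicator {..a} u * q u"
        using eventually_ge_at_top[of u] by eventually_elim (simp add: indicator_def)
      from Lim_transform_eventually[OF tendsto_const this]
      show "((\<lambda>a. indicator {..a} u * q u) \<longlongrightarrow> q u) at_top" .
    qed
    show "\<forall>\<^sub>F a in at_top. AE u in lborel. norm (indicator {..a} u * q u) \<le> q u"
      by (intro always_eventually allI AE_I2) (auto simp: indicator_def q_nn)
  qed
  then show ?thesis by (simp add: q_integral)
qed

lemma Qf_le1: "Qf a \<le> 1"
proof -
  have "Qf a \<le> (\<integral>u. q u \<partial>lborel)" unfolding Qf_def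
    by (rule integral_mono[OF _ q_int])
       (auto intro!: Bochner_Integration.integrable_bound[OF q_int] simp: indicator_def q_nn)
  then show ?thesis by (simp add: q_integral)
qed

lemma J_lim: "((\<lambda>x. \<integral>u. indicator {..a} u * q u * min 1 (q (x - u) / q x) \<partial>lborel) \<longlongrightarrow> Qf a) at_top"
  unfolding Qf_def
proof (rule integral_dominated_convergence_at_top[where w=q])
  show "(\<lambda>u. indicator {..a} u * q u) \<in> borel_measurable lborel" by measurable
  show "(\<lambda>u. indicator {..a} u * q u * min 1 (q (t - u) / q t)) \<in> borel_measurable lborel" for t
    by measurable
  show "integrable lborel q" by (rule q_int)
  show "AE u in lborel. ((\<lambda>x. indicator {..a} u * q u * min 1 (q (x - u) / q x)) \<longlongrightarrow> indicator {..a} u * q u) at_top"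
  proof (intro AE_I2)
    fix u
    have "((\<lambda>x. min 1 (q (x + - u) / q x)) \<longlongrightarrow> min 1 1) at_top"
      by (intro tendsto_min tendsto_const q_shift)
    then have "((\<lambda>x. indicator {..a} u * q u * min 1 (q (x - u) / q x)) \<longlongrightarrow> indicator {..a} u * q u * min 1 1) at_top"
      by (intro tendsto_mult_left) simp
    then show "((\<lambda>x. indicator {..a} u * q u * min 1 (q (x - u) / q x)) \<longlongrightarrow> indicator {..a} u * q u) at_top"
      by simp
  qed
  show "\<forall>\<^sub>F x in at_top. AE u in lborel. norm (indicator {..a} u * q u * min 1 (q (x - u) / q x)) \<le> q u"
  proof (intro always_eventually allI AE_I2)
    fix x u
    have "0 \<le> q (x - u) / q x" by (simp add: q_nn)
    then have "0 \<le> min 1 (q (x - u) / q x)" "min 1 (q (x - u) / q x) \<le> 1" by auto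
    then show "norm (indicator {..a} u * q u * min 1 (q (x - u) / q x)) \<le> q u"
      using q_nn[of u] by (auto simp: indicator_def abs_mult intro: mult_left_le)
  qed
qed

definition II :: "real \<Rightarrow> real \<Rightarrow> ennreal" where
  "II a x = (\<integral>\<^sup>+u. indicator {..a} u * ennreal (q u * q (x - u)) \<partial>lborel)"

lemma II_lower:
  assumes d: "0 < d"
  shows "\<forall>\<^sub>F x in at_top. ennreal ((Qf a - d) * q x) \<le> II a x"
proof -
  have "\<forall>\<^sub>F x in at_top. Qf a - d < (\<integral>u. indicator {..a} u * q u * min 1 (q (x - u) / q x) \<partial>lborel)"
    using J_lim[of a] by (rule order_tendstoD) (use d in simp)
  then show ?thesis using q_pos
  proof eventually_elim
    case (elim x)
    define J where "J = (\<integral>u. indicator {..a} u * q u * min 1 (q (x - u) / q x) \<partial>lborel)"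
    have int: "integrable lborel (\<lambda>u. indicator {..a} u * q u * min (q x) (q (x - u)))"
    proof (rule Bochner_Integration.integrable_bound[OF integrable_mult_right[OF q_int, of "q x"]])
      show "(\<lambda>u. indicator {..a} u * q u * min (q x) (q (x - u))) \<in> borel_measurable lborel" by measurable
      show "AE u in lborel. norm (indicator {..a} u * q u * min (q x) (q (x - u))) \<le> norm (q x * q u)"
      proof (intro AE_I2)
        fix u
        have "q u * min (q x) (q (x - u)) \<le> q u * q x"
          by (rule mult_left_mono) (auto simp: q_nn)
        then show "norm (indicator {..a} u * q u * min (q x) (q (x - u))) \<le> norm (q x * q u)"
          by (auto simp: indicator_def abs_mult q_nn mult.commute)
      qed
    qed
    have "J * q x = (\<integral>u. indicator {..a} u * q u * min (q x) (q (x - u)) \<partial>lborel)"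
    proof -
      have "J * q x = (\<integral>u. indicator {..a} u * q u * min 1 (q (x - u) / q x) * q x \<partial>lborel)"
        unfolding J_def by simp
      also have "\<dots> = (\<integral>u. indicator {..a} u * q u * min (q x) (q (x - u)) \<partial>lborel)"
        using elim by (intro Bochner_Integration.integral_cong refl)
          (auto simp: min_def field_simps)
      finally show ?thesis .
    qed
    then have "ennreal (J * q x) = (\<integral>\<^sup>+u. ennreal (indicator {..a} u * q u * min (q x) (q (x - u))) \<partial>lborel)"
      using nn_integral_eq_integral[OF int] by (simp add: q_nn)
    also have "\<dots> \<le> II a x" unfolding II_def
      by (intro nn_integral_mono) (auto simp: indicator_def q_nn intro!: ennreal_leI mult_left_mono)
    finally have "ennreal (J * q x) \<le> II a x" .
    moreover have "(Qf a - d) * q x \<le> J * q x"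
      using elim by (intro mult_right_mono) (auto simp: J_def q_nn)
    ultimately show ?case by (meson ennreal_leI order_trans)
  qed
qed

definition Mq :: "real \<Rightarrow> real \<Rightarrow> ennreal" where
  "Mq a x = (\<integral>\<^sup>+u. indicator {a<..} u * indicator {a<..} (x - u) * ennreal (q u * q (x - u)) \<partial>lborel)"

lemma reflect: fixes f :: "real \<Rightarrow> ennreal" shows "f \<in> borel_measurable borel \<Longrightarrow> (\<integral>\<^sup>+u. f (x - u) \<partial>lborel) = (\<integral>\<^sup>+u. f u \<partial>lborel)"
  using nn_integral_real_affine[of f "-1" x] by simp

lemma split_q:
  assumes x: "2 * a < x"
  shows "(\<integral>\<^sup>+u. ennreal (q (x - u) * q u) \<partial>lborel) = Mq a x + 2 * II a x"
proof -
  have pw: "ennreal (q (x - u) * q u) = indicator {a<..} u * indicator {a<..} (x - u) * ennreal (q u * q (x - u))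
     + indicator {..a} u * ennreal (q u * q (x - u)) + indicator {..a} (x - u) * ennreal (q (x - u) * q (x - (x - u)))" for u
    using x by (auto simp: indicator_def mult.commute)
  have "(\<integral>\<^sup>+u. ennreal (q (x - u) * q u) \<partial>lborel) = Mq a x + II a x +
     (\<integral>\<^sup>+u. indicator {..a} (x - u) * ennreal (q (x - u) * q (x - (x - u))) \<partial>lborel)"
    unfolding Mq_def II_def by (subst pw) (simp add: nn_integral_add)
  also have "(\<integral>\<^sup>+u. indicator {..a} (x - u) * ennreal (q (x - u) * q (x - (x - u))) \<partial>lborel) = II a x"
    unfolding II_def by (rule reflect[where f="\<lambda>u. indicator {..a} u * ennreal (q u * q (x - u))"]) measurable
  finally show ?thesis by (simp add: mult_2 add.assoc)
qed

lemma conv_pos: "\<forall>\<^sub>F x in at_top. 0 < fconv q q x \<and> ennreal (fconv q q x) = (\<integral>\<^sup>+u. ennreal (q (x - u) * q u) \<partial>lborel)"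
proof -
  have "\<forall>\<^sub>F x in at_top. 1 / 2 < fconv q q x / (2 * q x)"
    using q_conv by (rule order_tendstoD) simp
  then show ?thesis using q_pos
  proof eventually_elim
    case (elim x)
    then have pos: "0 < fconv q q x" by (auto simp: zero_less_divide_iff)
    have "integrable lborel (\<lambda>u. q (x - u) * q u)"
    proof (rule ccontr)
      assume "\<not> ?thesis"
      then have "fconv q q x = 0" unfolding fconv_def by (rule not_integrable_integral_eq)
      then show False using pos by simp
    qed
    from nn_integral_eq_integral[OF this] show ?case
      using pos unfolding fconv_def by (simp add: q_nn)
  qed
qed

end



lemma class_L_asymp:
  assumes qL: "class_L q" and [measurable]: "f \<in> borel_measurable borel" and nn: "\<And>x. 0 \<le> f x"
    and as: "asymp_equiv_top f q"
  shows "class_L f"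
proof -
  have qpos: "\<forall>\<^sub>F x in at_top. 0 < q x" and qs: "\<And>a. ((\<lambda>x. q (x + a) / q x) \<longlongrightarrow> 1) at_top"
    using qL unfolding class_L_def asymp_equiv_top_def by auto
  have fq: "((\<lambda>x. f x / q x) \<longlongrightarrow> 1) at_top" using as unfolding asymp_equiv_top_def .
  have "\<forall>\<^sub>F x in at_top. 0 < f x / q x" using fq by (rule order_tendstoD) simp
  then have fpos: "\<forall>\<^sub>F x in at_top. 0 < f x"
    using qpos by eventually_elim (auto simp: zero_less_divide_iff)
  have "asymp_equiv_top (\<lambda>x. f (x + a)) f" for a
  proof -
    have "((\<lambda>x. (f (x + a) / q (x + a)) * (q (x + a) / q x) / (f x / q x)) \<longlongrightarrow> 1 * 1 / 1) at_top"
      by (intro tendsto_divide tendsto_mult fq qs tendsto_shift[OF fq]) simp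
    moreover have "\<forall>\<^sub>F x in at_top. (f (x + a) / q (x + a)) * (q (x + a) / q x) / (f x / q x) = f (x + a) / f x"
      using qpos eventually_shift[OF qpos, of a] fpos by eventually_elim (simp add: field_simps)
    ultimately show ?thesis unfolding asymp_equiv_top_def
      using Lim_transform_eventually by fastforce
  qed
  then show ?thesis unfolding class_L_def using nn fpos by auto
qed

context dist0 begin

lemma S_Delta_iff:
  assumes c: "0 < c" and L: "class_L (gg c)"
  shows "S_Delta c \<mu> \<longleftrightarrow> ((\<lambda>x. HH c x / gg c x) \<longlongrightarrow> 2) at_top"
proof -
  have LD: "L_Delta c \<mu>"
  proof -
    have "(\<lambda>x. measure \<mu> {x<..x + c}) = (\<lambda>x. gg c (x + c))" by (simp add: gg_def)
    then show ?thesis unfolding L_Delta_def using class_L_shift_iff[of "gg c" c] L by simp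
  qed
  have e1: "(\<lambda>x. measure (\<mu> \<star> \<mu>) {x<..x + c}) = (\<lambda>x. HH c (x + c))" by (simp add: HH_def)
  have e2: "(\<lambda>x. 2 * measure \<mu> {x<..x + c}) = (\<lambda>x. 2 * gg c (x + c))" by (simp add: gg_def)
  have "asymp_equiv_top (\<lambda>x. HH c (x + c)) (\<lambda>x. 2 * gg c (x + c)) \<longleftrightarrow> asymp_equiv_top (HH c) (\<lambda>x. 2 * gg c x)"
    using asymp_shift_iff[of "HH c" c "\<lambda>x. 2 * gg c x"] by simp
  also have "\<dots> \<longleftrightarrow> ((\<lambda>x. (HH c x / gg c x) / 2) \<longlongrightarrow> 1) at_top"
    unfolding asymp_equiv_top_def by (simp add: field_simps)
  also have "\<dots> \<longleftrightarrow> ((\<lambda>x. HH c x / gg c x) \<longlongrightarrow> 2) at_top"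
    using tendsto_div_const_iff[of 2 "\<lambda>x. HH c x / gg c x" 1 at_top] by simp
  finally show ?thesis unfolding S_Delta_def e1 e2 using LD by simp
qed

lemma MK_upper:
  assumes c: "0 < c"
  shows "ennreal (MK c a x) \<le> (\<integral>\<^sup>+u. indicator {a<..} u * indicator {a<..} (x - u) * ennreal (gg c u * gg c (x - u)) \<partial>lborel)"
proof -
  have [measurable]: "gg c \<in> borel_measurable borel" using c by (intro gg_measurable) simp
  have "ennreal (MK c a x) = (\<integral>\<^sup>+y. \<integral>\<^sup>+z. indicator {a<..} y * indicator {a<..} z * ennreal (TT c (x - y - z)) \<partial>\<mu> \<partial>\<mu>)"
    unfolding E_MK[OF less_imp_le[OF c]]
    by (intro nn_integral_cong) (auto simp: indicator_def)
  also have "\<dots> = (\<integral>\<^sup>+u. (\<integral>\<^sup>+y. indicator {a<..} y * indicator {u - c<..u} y \<partial>\<mu>) * (\<integral>\<^sup>+z. indicator {a<..} z * indicator {x - u - c<..x - u} z \<partial>\<mu>) \<partial>lborel)"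
    by (rule conv_tonelli[OF c, symmetric]) auto
  also have "\<dots> \<le> (\<integral>\<^sup>+u. (indicator {a<..} u * ennreal (gg c u)) * (indicator {a<..} (x - u) * ennreal (gg c (x - u))) \<partial>lborel)"
  proof (intro nn_integral_mono mult_mono)
    fix u
    show "(\<integral>\<^sup>+y. indicator {a<..} y * indicator {u - c<..u} y \<partial>\<mu>) \<le> indicator {a<..} u * ennreal (gg c u)"
    proof (cases "a < u")
      case True
      have "(\<integral>\<^sup>+y. indicator {a<..} y * indicator {u - c<..u} y \<partial>\<mu>) \<le> (\<integral>\<^sup>+y. indicator {u - c<..u} y \<partial>\<mu>)"
        by (intro nn_integral_mono) (auto simp: indicator_def)
      also have "\<dots> = ennreal (gg c u)" by (rule gg_nn[symmetric])
      finally show ?thesis using True by simp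
    next
      case False
      then have "(\<integral>\<^sup>+y. indicator {a<..} y * indicator {u - c<..u} y \<partial>\<mu>) = (\<integral>\<^sup>+y. 0 \<partial>\<mu>)"
        by (intro nn_integral_cong) (auto simp: indicator_def)
      then show ?thesis by simp
    qed
    show "(\<integral>\<^sup>+z. indicator {a<..} z * indicator {x - u - c<..x - u} z \<partial>\<mu>) \<le> indicator {a<..} (x - u) * ennreal (gg c (x - u))"
    proof (cases "a < x - u")
      case True
      have "(\<integral>\<^sup>+z. indicator {a<..} z * indicator {x - u - c<..x - u} z \<partial>\<mu>) \<le> (\<integral>\<^sup>+z. indicator {x - u - c<..x - u} z \<partial>\<mu>)"
        by (intro nn_integral_mono) (auto simp: indicator_def)
      also have "\<dots> = ennreal (gg c (x - u))" by (rule gg_nn[symmetric])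
      finally show ?thesis using True by simp
    next
      case False
      then have "(\<integral>\<^sup>+z. indicator {a<..} z * indicator {x - u - c<..x - u} z \<partial>\<mu>) = (\<integral>\<^sup>+z. 0 \<partial>\<mu>)"
        by (intro nn_integral_cong) (auto simp: indicator_def)
      then show ?thesis by simp
    qed
  qed auto
  also have "\<dots> = (\<integral>\<^sup>+u. indicator {a<..} u * indicator {a<..} (x - u) * ennreal (gg c u * gg c (x - u)) \<partial>lborel)"
    by (intro nn_integral_cong) (simp add: ennreal_mult gg_nonneg mult_ac)
  finally show ?thesis .
qed

end



context dist0 begin

lemma part2_back:
  assumes c: "0 < c" and Q: "qd q" and as: "asymp_equiv_top (\<lambda>x. measure \<mu> {x - c<..x} / c) q"
  shows "S_Delta c \<mu>"
proof -
  interpret qd q by (rule Q)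
  have [measurable]: "gg c \<in> borel_measurable borel" using c by (intro gg_measurable) simp
  have p: "(\<lambda>x. measure \<mu> {x - c<..x} / c) = (\<lambda>x. gg c x / c)" by (simp add: gg_def)
  have asp: "asymp_equiv_top (\<lambda>x. gg c x / c) q" using as p by simp
  have Lp: "class_L (\<lambda>x. gg c x / c)"
    by (rule class_L_asymp[OF q_L _ _ asp]) (use c in \<open>auto simp: gg_nonneg\<close>)
  have L: "class_L (gg c)" using Lp class_L_div_iff[OF c] by simp
  interpret distL \<mu> c by (rule to_distL[OF c L])
  have ratio: "((\<lambda>x. (gg c x / c) / q x) \<longlongrightarrow> 1) at_top" using asp unfolding asymp_equiv_top_def .
  have qle: "\<forall>\<^sub>F x in at_top. q x \<le> 2 * (gg c x / c)"
  proof -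
    have "\<forall>\<^sub>F x in at_top. 1 / 2 < (gg c x / c) / q x" using ratio by (rule order_tendstoD) simp
    then show ?thesis using q_pos
    proof eventually_elim
      case (elim x)
      then have "1 / 2 * q x < gg c x / c" by (metis pos_less_divide_eq)
      then show ?case by linarith
    qed
  qed
  have "\<forall>\<^sub>F x in at_top. gg c x / c \<le> 2 * q x"
  proof -
    have "\<forall>\<^sub>F x in at_top. (gg c x / c) / q x < 2" using ratio by (rule order_tendstoD) simp
    then show ?thesis using q_pos
    proof eventually_elim
      case (elim x)
      then have "gg c x / c < 2 * q x" by (metis pos_divide_less_eq)
      then show ?case by linarith
    qed
  qed
  then obtain N0 where N0: "\<And>z. z \<ge> N0 \<Longrightarrow> gg c z / c \<le> 2 * q z"
    unfolding eventually_at_top_linorder by blast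
  have N0': "gg c z \<le> 2 * c * q z" if "z \<ge> N0" for z
    using N0[OF that] c by (simp add: divide_le_eq mult_ac)
  have "((\<lambda>x. HH c x / gg c x) \<longlongrightarrow> 2) at_top"
  proof (rule core)
    fix \<eta> :: real assume \<eta>: "0 < \<eta>"
    define d where "d = \<eta> / (48 * c)"
    have d: "0 < d" using \<eta> c by (simp add: d_def)
    have "\<forall>\<^sub>F a in at_top. 1 - \<eta> / (32 * c) < Qf a"
      using Qf_lim by (rule order_tendstoD) (use \<eta> c in simp)
    then obtain A where A: "\<And>a. a \<ge> A \<Longrightarrow> 1 - \<eta> / (32 * c) < Qf a"
      unfolding eventually_at_top_linorder by blast
    define a where "a = max A (max N0 0)"
    have a: "0 \<le> a" "N0 \<le> a" "1 - \<eta> / (32 * c) < Qf a" using A[of a] by (auto simp: a_def)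
    have F1: "\<forall>\<^sub>F x in at_top. 2 * a < x" by real_asymp
    have F3: "\<forall>\<^sub>F x in at_top. fconv q q x / (2 * q x) < 1 + d / 2"
      using q_conv by (rule order_tendstoD) (use d in simp)
    have "\<forall>\<^sub>F x in at_top. MK c a x \<le> \<eta> * gg c x"
      using F1 conv_pos F3 II_lower[OF d, of a] qle q_pos
    proof eventually_elim
      case (elim x)
      have fpos: "0 < fconv q q x" and E: "ennreal (fconv q q x) = (\<integral>\<^sup>+u. ennreal (q (x - u) * q u) \<partial>lborel)"
        using elim by auto
      have S: "ennreal (fconv q q x) = Mq a x + 2 * II a x" using E split_q[of a x] elim by simp
      have le1: "Mq a x \<le> ennreal (fconv q q x)" unfolding S by simp
      have le2: "II a x \<le> ennreal (fconv q q x)" unfolding S mult_2 by (simp add: add_increasing)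
      have fin: "Mq a x < \<top>" "II a x < \<top>"
        using le1 le2 by (auto intro: le_less_trans)
      define m where "m = enn2real (Mq a x)"
      define i where "i = enn2real (II a x)"
      have Mm: "Mq a x = ennreal m" and Ii: "II a x = ennreal i"
        using fin by (simp_all add: m_def i_def ennreal_enn2real_if)
      have m0: "0 \<le> m" "0 \<le> i" by (simp_all add: m_def i_def)
      have "ennreal (fconv q q x) = ennreal (m + 2 * i)"
        using S Mm Ii m0 by (simp add: ennreal_2 ennreal_plus[symmetric] del: ennreal_plus)
      then have fmi: "fconv q q x = m + 2 * i"
        using fpos m0 by (subst (asm) ennreal_inj) auto
      have il: "(Qf a - d) * q x \<le> i"
      proof (cases "0 \<le> (Qf a - d) * q x")
        case True
        have "ennreal ((Qf a - d) * q x) \<le> ennreal i" using elim Ii by simp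
        then show ?thesis using m0 by (subst (asm) ennreal_le_iff) auto
      next
        case False
        then show ?thesis using m0 by simp
      qed
      have fl: "fconv q q x < (2 + d) * q x"
        using elim by (simp add: divide_less_eq field_simps)
      have mle: "m < (2 - 2 * Qf a + 3 * d) * q x"
        using fmi il fl by (simp add: algebra_simps)
      have "ennreal (MK c a x) \<le> (\<integral>\<^sup>+u. indicator {a<..} u * indicator {a<..} (x - u) * ennreal (gg c u * gg c (x - u)) \<partial>lborel)"
        by (rule MK_upper[OF c])
      also have "\<dots> \<le> (\<integral>\<^sup>+u. ennreal (4 * c\<^sup>2) * (indicator {a<..} u * indicator {a<..} (x - u) * ennreal (q u * q (x - u))) \<partial>lborel)"
      proof (intro nn_integral_mono)
        fix u
        show "indicator {a<..} u * indicator {a<..} (x - u) * ennreal (gg c u * gg c (x - u))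
          \<le> ennreal (4 * c\<^sup>2) * (indicator {a<..} u * indicator {a<..} (x - u) * ennreal (q u * q (x - u)))"
        proof (cases "a < u \<and> a < x - u")
          case True
          have "gg c u * gg c (x - u) \<le> (2 * c * q u) * (2 * c * q (x - u))"
            by (intro mult_mono N0') (use True a c in \<open>auto simp: gg_nonneg q_nn\<close>)
          also have "\<dots> = 4 * c\<^sup>2 * (q u * q (x - u))" by (simp add: power2_eq_square mult_ac)
          finally have "ennreal (gg c u * gg c (x - u)) \<le> ennreal (4 * c\<^sup>2 * (q u * q (x - u)))"
            by (rule ennreal_leI)
          then show ?thesis using True c by (simp add: ennreal_mult q_nn)
        qed (auto simp: indicator_def)
      qed
      also have "\<dots> = ennreal (4 * c\<^sup>2) * Mq a x"
        unfolding Mq_def by (rule nn_integral_cmult) measurable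
      also have "\<dots> = ennreal (4 * c\<^sup>2 * m)" using Mm m0 by (simp add: ennreal_mult)
      finally have MKm: "MK c a x \<le> 4 * c\<^sup>2 * m"
        by (subst (asm) ennreal_le_iff) (use m0 in auto)
      have qx: "0 < q x" using elim by simp
      have "4 * c\<^sup>2 * m \<le> 4 * c\<^sup>2 * ((2 - 2 * Qf a + 3 * d) * q x)"
        using mle c by (intro mult_left_mono) auto
      also have "(2 - 2 * Qf a + 3 * d) \<le> \<eta> / (8 * c)"
      proof -
        have h0: "2 * (\<eta> / (32 * c)) = \<eta> / (16 * c)" by simp
        have h1: "2 * (1 - Qf a) \<le> \<eta> / (16 * c)"
        proof -
          obtain t where t: "t = \<eta> / (32 * c)" by simp
          have "1 - Qf a < t" using a(3) t by simp
          moreover have "2 * t = \<eta> / (16 * c)" using t h0 by simp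
          ultimately show ?thesis by (smt (verit))
        qed
        have h2: "3 * d = \<eta> / (16 * c)" unfolding d_def by simp
        have h3: "\<eta> / (16 * c) + \<eta> / (16 * c) = \<eta> / (8 * c)" by simp
        show ?thesis using h1 h2 h3 by (smt (verit))
      qed
      then have "4 * c\<^sup>2 * ((2 - 2 * Qf a + 3 * d) * q x) \<le> 4 * c\<^sup>2 * (\<eta> / (8 * c) * q x)"
        using qx c by (intro mult_left_mono mult_right_mono) auto
      also have "\<dots> = (c * \<eta> / 2) * q x" using c by (simp add: power2_eq_square field_simps)
      also have "\<dots> \<le> (c * \<eta> / 2) * (2 * (gg c x / c))"
        using elim c \<eta> by (intro mult_left_mono) auto
      also have "\<dots> = \<eta> * gg c x" using c by (simp add: field_simps)
      finally show ?case using MKm by linarith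
    qed
    then show "\<exists>a\<ge>0. \<forall>\<^sub>F x in at_top. MK c a x \<le> \<eta> * gg c x" using a by blast
  qed
  then show ?thesis using S_Delta_iff[OF c L] by simp
qed

end



context dist0 begin

lemma SD_L: "S_Delta r \<mu> \<Longrightarrow> class_L (gg r)"
proof -
  assume "S_Delta r \<mu>"
  then have "class_L (\<lambda>x. measure \<mu> {x<..x + r})" unfolding S_Delta_def L_Delta_def by simp
  moreover have "(\<lambda>x. measure \<mu> {x<..x + r}) = (\<lambda>x. gg r (x + r))" by (simp add: gg_def)
  ultimately show "class_L (gg r)" using class_L_shift_iff[of "gg r" r] by simp
qed

lemma part2:
  "S_loc \<mu> \<longleftrightarrow> (\<exists>q. density_fun q \<and> (\<forall>x<0. q x = 0) \<and> S_d q \<and>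
             (\<forall>c'>0. asymp_equiv_top (\<lambda>x. measure \<mu> {x - c'<..x} / c') q))"
proof
  assume S: "S_loc \<mu>"
  then have SD: "\<And>r. 0 < r \<Longrightarrow> S_Delta r \<mu>" unfolding S_loc_def by auto
  have L: "\<And>r. 0 < r \<Longrightarrow> class_L (gg r)" using SD SD_L by blast
  define q where "q = (\<lambda>x. measure \<mu> {x - 1<..x} / 1)"
  have q: "q = (\<lambda>x. gg 1 x / 1)" by (simp add: q_def gg_def)
  have "density_fun q" unfolding q by (rule density_p) simp
  moreover have "\<forall>x<0. q x = 0"
  proof (intro allI impI)
    fix x :: real assume "x < 0"
    then have "measure \<mu> {x - 1<..x} \<le> measure \<mu> {..<0}"
      by (intro finite_measure_mono) (auto simp: sets_mu)
    then show "q x = 0" using neg0 unfolding q_def by (simp add: measure_le_0_iff)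
  qed
  moreover have "S_d q" unfolding q_def using part1[of 1] SD[of 1] by simp
  moreover have "asymp_equiv_top (\<lambda>x. measure \<mu> {x - c'<..x} / c') q" if c': "0 < c'" for c'
  proof -
    have "((\<lambda>x. gg c' x / gg 1 x) \<longlongrightarrow> 1 * c') at_top" using L_loc_ratio[OF L c'] by simp
    then have "((\<lambda>x. (gg c' x / gg 1 x) / c') \<longlongrightarrow> 1) at_top"
      using tendsto_div_const_iff[of c' "\<lambda>x. gg c' x / gg 1 x" 1 at_top] c' by simp
    moreover have "(\<lambda>x. (gg c' x / gg 1 x) / c') = (\<lambda>x. (measure \<mu> {x - c'<..x} / c') / q x)"
      by (simp add: q gg_def mult.commute)
    ultimately show ?thesis unfolding asymp_equiv_top_def by simp
  qed
  ultimately show "\<exists>q. density_fun q \<and> (\<forall>x<0. q x = 0) \<and> S_d q \<and>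
             (\<forall>c'>0. asymp_equiv_top (\<lambda>x. measure \<mu> {x - c'<..x} / c') q)" by blast
next
  assume "\<exists>q. density_fun q \<and> (\<forall>x<0. q x = 0) \<and> S_d q \<and>
             (\<forall>c'>0. asymp_equiv_top (\<lambda>x. measure \<mu> {x - c'<..x} / c') q)"
  then obtain q where q: "density_fun q" "S_d q" "\<And>c'. 0 < c' \<Longrightarrow> asymp_equiv_top (\<lambda>x. measure \<mu> {x - c'<..x} / c') q"
    by blast
  have Q: "qd q" by unfold_locales (use q in auto)
  show "S_loc \<mu>" unfolding S_loc_def
    using part2_back[OF _ Q q(3)] by blast
qed

end

theorem proposition1p1:
  fixes \<mu> :: "real measure" and c :: real
  assumes "real_distribution' \<mu>"
    and "measure \<mu> {..<0} = 0"
    and "c > 0"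
  shows "(S_Delta c \<mu> \<longleftrightarrow> S_d (\<lambda>x. measure \<mu> {x - c<..x} / c))
    \<and> (S_loc \<mu> \<longleftrightarrow>
        (\<exists>q. density_fun q \<and> (\<forall>x<0. q x = 0) \<and> S_d q \<and>
             (\<forall>c'>0. asymp_equiv_top (\<lambda>x. measure \<mu> {x - c'<..x} / c') q)))"
proof -
  interpret dist0 \<mu>
    using assms(1,2) unfolding real_distribution'_def dist0_def dist0_axioms_def by auto
  show ?thesis using part1[OF assms(3)] part2 by blast
qed


end
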